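(* Let $D$ be a subsemigroup of $(\mathbb N_0,+)$ such that $\mathbb N\setminus D$ is infinite. Then every set $\mathcal G$ of two-colored partitions with $\langle\mathcal G\rangle=\mathcal I_D$ is infinite.
   Context: $\mathbb N=\{1,2,\dots\}$, $\mathbb N_0=\mathbb N\cup\{0\}$. A (two-colored) partition $p$ consists of two finite totally ordered sets $U$ (upper row, left to right) and $L$ (lower row), a decomposition of $U\sqcup L$ (the points) into non-empty pairwise disjoint blocks, and a coloring of each point by $\circ$ or $\bullet$. A pair partition has only two-point blocks. Operations: tensor product $p\otimes p'$ (append the rows of $p'$ to the right of those of $p$); involution $p^*$ (exchange the rows); composition $pp'$, defined when the lower row of $p'$ and the upper row of $p$ agree in length and coloring: put $p'$ on top of $p$, identify the lower row of $p'$ with the upper row of $p$, keep the upper row of $p'$ and lower row of $p$, and let two remaining points be in the same block iff connected through blocks of $p,p'$ via the middle points (components entirely in the middle are discarded). A category of partitions is a set of partitions closed under these three operations and containing the partitions with one upper and one lower point of equal color $c\in\{\circ,\bullet\}$ forming a block, and the partitions with empty upper row and lower row $\circ\bullet$ resp. $\bullet\circ$ forming a block. $\langle\mathcal G\rangle$ is the smallest category containing $\mathcal G$. On the points of $p$ consider the cyclic order obtained by traversing the lower row left to right and then the upper row right to left. $]\alpha,\beta[$: points strictly after $\alpha$ and before $\beta$ in this cyclic order; $]\alpha,\beta]:=]\alpha,\beta[\cup\{\beta\}$ for $\alpha\ne\beta$, $]\alpha,\alpha]:=\emptyset$. Normalized color: the color for lower points, the opposite color for upper points. $\sigma_p(S)$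 = #normalized-$\circ$ points of $S$ $-$ #normalized-$\bullet$ points of $S$. Distinct blocks $B,B'$ cross if there are $\alpha,\beta\in B,\gamma,\delta\in B'$ in cyclic order $\alpha,\gamma,\beta,\delta$. $\mathcal P^{\circ\bullet}_{2,\mathrm{nb}}$: pair partitions each block of which has one point of each normalized color. $\mathcal S_0$: those $p\in\mathcal P^{\circ\bullet}_{2,\mathrm{nb}}$ with $\sigma_p(]\alpha,\beta[)=0$ for all blocks $\{\alpha,\beta\}$. For $p\in\mathcal S_0$: $\delta_p(\alpha,\beta)=\sigma_p(]\alpha,\beta[)$ for different normalized colors, $\sigma_p(]\alpha,\beta])$ for equal ones; $d_p(B,B')=|\delta_p(\alpha,\alpha')|$ for any $\alpha\in B,\alpha'\in B'$ (well defined). A subsemigroup of $(\mathbb N_0,+)$ is a possibly empty subset closed under addition. $\mathcal I_D$: all $p\in\mathcal S_0$ with $d_p(B,B')\notin D$ for all crossing blocks $B,B'$. *)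

theory Defs
  imports Main "HOL-Library.Disjoint_Sets"
begin

datatype color = White | Black   (* White = \<circ>, Black = \<bullet> *)

fun flipc :: "color \<Rightarrow> color" where
  "flipc White = Black" | "flipc Black = White"

text \<open>Points: U i is the i-th upper point, L j the j-th lower point (0-based, left to right).\<close>
datatype pt = U nat | L nat

datatype part = Part (upc: "color list") (loc: "color list") (blks: "pt set set")

definition points :: "part \<Rightarrow> pt set" where
  "points p = {U i | i. i < length (upc p)} \<union> {L j | j. j < length (loc p)}"

definition wf_part :: "part \<Rightarrow> bool" where
  "wf_part p \<longleftrightarrow> partition_on (points p) (blks p)"

fun shift_pt :: "nat \<Rightarrow> nat \<Rightarrow> pt \<Rightarrow> pt" where
  "shift_pt a b (U i) = U (i + a)" | "shift_pt a b (L j) = L (j + b)"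

definition tensor :: "part \<Rightarrow> part \<Rightarrow> part" where
  "tensor p q = Part (upc p @ upc q) (loc p @ loc q)
     (blks p \<union> (image (shift_pt (length (upc p)) (length (loc p)))) ` blks q)"

fun swap_pt :: "pt \<Rightarrow> pt" where
  "swap_pt (U i) = L i" | "swap_pt (L j) = U j"

definition invol :: "part \<Rightarrow> part" where
  "invol p = Part (loc p) (upc p) (image swap_pt ` blks p)"

text \<open>Composition comp p q = pq: q is put on top of p (requires loc q = upc p).
  Points of q are tagged Inl, points of p are tagged Inr.\<close>
definition comp_edges :: "part \<Rightarrow> part \<Rightarrow> ((pt + pt) \<times> (pt + pt)) set" where
  "comp_edges p q =
     {(Inl x, Inl y) | x y. \<exists>B\<in>blks q. x \<in> B \<and> y \<in> B}
   \<union> {(Inr x, Inr y) | x y. \<exists>B\<in>blks p. x \<in> B \<and> y \<in> B}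
   \<union> {(Inl (L i), Inr (U i)) | i. i < length (upc p)}
   \<union> {(Inr (U i), Inl (L i)) | i. i < length (upc p)}"

fun outer :: "pt \<Rightarrow> pt + pt" where
  "outer (U i) = Inl (U i)" | "outer (L j) = Inr (L j)"

definition comp :: "part \<Rightarrow> part \<Rightarrow> part" where
  "comp p q =
     (let R = points (Part (upc q) (loc p) {}) in
      Part (upc q) (loc p)
        {{y \<in> R. (outer x, outer y) \<in> (comp_edges p q)\<^sup>*} | x. x \<in> R})"

definition idp :: "color \<Rightarrow> part" where
  "idp c = Part [c] [c] {{U 0, L 0}}"

definition pairWB :: part where "pairWB = Part [] [White, Black] {{L 0, L 1}}"
definition pairBW :: part where "pairBW = Part [] [Black, White] {{L 0, L 1}}"

definition is_category :: "part set \<Rightarrow> bool" where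
  "is_category C \<longleftrightarrow>
     C \<subseteq> {p. wf_part p}
   \<and> (\<forall>p\<in>C. \<forall>q\<in>C. tensor p q \<in> C)
   \<and> (\<forall>p\<in>C. invol p \<in> C)
   \<and> (\<forall>p\<in>C. \<forall>q\<in>C. loc q = upc p \<longrightarrow> comp p q \<in> C)
   \<and> idp White \<in> C \<and> idp Black \<in> C \<and> pairWB \<in> C \<and> pairBW \<in> C"

definition gen_cat :: "part set \<Rightarrow> part set" where
  "gen_cat G = \<Inter>{C. is_category C \<and> G \<subseteq> C}"

definition npts :: "part \<Rightarrow> int" where
  "npts p = int (length (upc p) + length (loc p))"

text \<open>Position in the cyclic order: lower row left to right, then upper row right to left.\<close>
fun pos :: "part \<Rightarrow> pt \<Rightarrow> int" where
  "pos p (L j) = int j"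
| "pos p (U i) = int (length (loc p)) + (int (length (upc p)) - 1 - int i)"

text \<open>Open cyclic interval ]a,b[ (used for a \<noteq> b).\<close>
definition oint :: "part \<Rightarrow> pt \<Rightarrow> pt \<Rightarrow> pt set" where
  "oint p a b = {c \<in> points p. 0 < (pos p c - pos p a) mod npts p
                  \<and> (pos p c - pos p a) mod npts p < (pos p b - pos p a) mod npts p}"

definition hint :: "part \<Rightarrow> pt \<Rightarrow> pt \<Rightarrow> pt set" where
  "hint p a b = (if a = b then {} else oint p a b \<union> {b})"

fun ncol :: "part \<Rightarrow> pt \<Rightarrow> color" where
  "ncol p (L j) = loc p ! j"
| "ncol p (U i) = flipc (upc p ! i)"

definition sigma :: "part \<Rightarrow> pt set \<Rightarrow> int" where
  "sigma p S = int (card {x \<in> S. ncol p x = White}) - int (card {x \<in> S. ncol p x = Black})"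

definition crosses :: "part \<Rightarrow> pt set \<Rightarrow> pt set \<Rightarrow> bool" where
  "crosses p B B' \<longleftrightarrow> B \<noteq> B' \<and>
     (\<exists>a\<in>B. \<exists>b\<in>B. \<exists>c\<in>B'. \<exists>d\<in>B'. c \<in> oint p a b \<and> d \<in> oint p b a)"

definition P2nb :: "part set" where
  "P2nb = {p. wf_part p \<and>
     (\<forall>B\<in>blks p. \<exists>x y. B = {x, y} \<and> ncol p x = White \<and> ncol p y = Black)}"

definition S0 :: "part set" where
  "S0 = {p \<in> P2nb. \<forall>B\<in>blks p. \<forall>a\<in>B. \<forall>b\<in>B. a \<noteq> b \<longrightarrow> sigma p (oint p a b) = 0}"

definition deltap :: "part \<Rightarrow> pt \<Rightarrow> pt \<Rightarrow> int" where
  "deltap p a b = (if ncol p a \<noteq> ncol p b then sigma p (oint p a b) else sigma p (hint p a b))"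

definition dp :: "part \<Rightarrow> pt set \<Rightarrow> pt set \<Rightarrow> nat" where
  "dp p B B' = nat \<bar>deltap p (SOME a. a \<in> B) (SOME a'. a' \<in> B')\<bar>"

definition I_D :: "nat set \<Rightarrow> part set" where
  "I_D D = {p \<in> S0. \<forall>B\<in>blks p. \<forall>B'\<in>blks p. crosses p B B' \<longrightarrow> dp p B B' \<notin> D}"

end

theory Submission
  imports Defs "HOL-Library.Infinite_Set"
begin


definition csgn :: "color \<Rightarrow> int" where "csgn c = (if c = White then 1 else -1)"

definition SL :: "color list \<Rightarrow> nat \<Rightarrow> int" where
  "SL cs j = (\<Sum>t<j. csgn (cs ! t))"

definition lvL :: "color list \<Rightarrow> nat \<Rightarrow> int" where
  "lvL cs j = min (SL cs j) (SL cs (Suc j))"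

fun lvp :: "part \<Rightarrow> pt \<Rightarrow> int" where
  "lvp p (L j) = lvL (loc p) j" | "lvp p (U i) = lvL (upc p) i"

definition NN :: "part \<Rightarrow> nat" where "NN p = length (upc p) + length (loc p)"

fun posn :: "part \<Rightarrow> pt \<Rightarrow> nat" where
  "posn p (L j) = j"
| "posn p (U i) = length (loc p) + (length (upc p) - 1 - i)"

definition at :: "part \<Rightarrow> nat \<Rightarrow> pt" where
  "at p k = (if k < length (loc p) then L k else U (length (loc p) + length (upc p) - 1 - k))"

lemma points_iff: "x \<in> points p \<longleftrightarrow> (case x of L j \<Rightarrow> j < length (loc p) | U i \<Rightarrow> i < length (upc p))"
  by (cases x) (auto simp: points_def)

lemma finite_points[simp]: "finite (points p)"
proof -
  have "points p \<subseteq> U ` {..<length (upc p)} \<union> L ` {..<length (loc p)}"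
    by (auto simp: points_def)
  then show ?thesis by (rule finite_subset) auto
qed

lemma posn_lt: "x \<in> points p \<Longrightarrow> posn p x < NN p"
  by (cases x) (auto simp: points_iff NN_def)

lemma at_posn[simp]: "x \<in> points p \<Longrightarrow> at p (posn p x) = x"
  by (cases x) (auto simp: points_iff at_def)

lemma at_points: "k < NN p \<Longrightarrow> at p k \<in> points p"
  by (auto simp: points_iff at_def NN_def)

lemma posn_at[simp]: "k < NN p \<Longrightarrow> posn p (at p k) = k"
  by (auto simp: at_def NN_def)

lemma pos_posn: "x \<in> points p \<Longrightarrow> pos p x = int (posn p x)"
  by (cases x) (auto simp: points_iff)

lemma npts_NN: "npts p = int (NN p)" by (simp add: npts_def NN_def)

lemma posn_inj: "x \<in> points p \<Longrightarrow> y \<in> points p \<Longrightarrow> posn p x = posn p y \<Longrightarrow> x = y"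
  by (metis at_posn)

lemma points_at_image: "points p = at p ` {..<NN p}"
proof safe
  fix x assume "x \<in> points p"
  then show "x \<in> at p ` {..<NN p}" using posn_lt by (intro image_eqI[where x="posn p x"]) auto
qed (auto intro: at_points)

lemma inj_at: "inj_on (at p) {..<NN p}"
  by (metis inj_on_inverseI lessThan_iff posn_at)

definition cyc :: "nat \<Rightarrow> nat \<Rightarrow> nat \<Rightarrow> bool" where
  "cyc a b c = (if a < b then a < c \<and> c < b else if b < a then a < c \<or> c < b else False)"

lemma mod_small: "-(N::int) < x \<Longrightarrow> x < N \<Longrightarrow> x mod N = (if 0 \<le> x then x else x + N)"
proof -
  assume a: "-N < x" "x < N"
  show ?thesis
  proof (cases "0 \<le> x")
    case True then show ?thesis using a by simp
  next
    case False
    then have "(x + N) mod N = x + N" using a by (intro mod_pos_pos_trivial) auto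
    then show ?thesis using False by simp
  qed
qed

lemma cyc_mod:
  assumes "a < N" "b < N" "c < N"
  shows "(0 < (int c - int a) mod int N \<and> (int c - int a) mod int N < (int b - int a) mod int N) \<longleftrightarrow> cyc a b c"
proof -
  have 1: "(int c - int a) mod int N = (if a \<le> c then int c - int a else int c - int a + int N)"
    using assms by (subst mod_small) auto
  have 2: "(int b - int a) mod int N = (if a \<le> b then int b - int a else int b - int a + int N)"
    using assms by (subst mod_small) auto
  show ?thesis unfolding 1 2 cyc_def using assms by auto
qed

lemma oint_iff:
  assumes "a \<in> points p" "b \<in> points p"
  shows "c \<in> oint p a b \<longleftrightarrow> c \<in> points p \<and> cyc (posn p a) (posn p b) (posn p c)"
proof -
  have "c \<in> points p \<Longrightarrow> ?thesis"
    unfolding oint_def using assms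
    by (simp add: pos_posn npts_NN cyc_mod posn_lt)
  then show ?thesis unfolding oint_def by auto
qed

lemma oint_sub: "oint p a b \<subseteq> points p" by (auto simp: oint_def)

lemma oint_at:
  assumes "a \<in> points p" "b \<in> points p"
  shows "oint p a b = at p ` {k. k < NN p \<and> cyc (posn p a) (posn p b) k}"
proof safe
  fix c assume c: "c \<in> oint p a b"
  then have "c \<in> points p" using oint_sub by blast
  then show "c \<in> at p ` {k. k < NN p \<and> cyc (posn p a) (posn p b) k}"
    using c oint_iff[OF assms] posn_lt
    by (intro image_eqI[where x="posn p c"]) auto
next
  fix k assume "k < NN p" "cyc (posn p a) (posn p b) k"
  then show "at p k \<in> oint p a b" using oint_iff[OF assms] at_points by auto
qed

lemma sigma_sum: "finite S \<Longrightarrow> sigma p S = (\<Sum>x\<in>S. csgn (ncol p x))"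
proof (induction S rule: finite_induct)
  case empty then show ?case by (simp add: sigma_def)
next
  case (insert x F)
  have e1: "{y \<in> insert x F. ncol p y = White} = (if ncol p x = White then insert x {y \<in> F. ncol p y = White} else {y \<in> F. ncol p y = White})" by auto
  have e2: "{y \<in> insert x F. ncol p y = Black} = (if ncol p x = Black then insert x {y \<in> F. ncol p y = Black} else {y \<in> F. ncol p y = Black})" by auto
  have "ncol p x = White \<or> ncol p x = Black" by (cases "ncol p x") auto
  then show ?case using insert unfolding sigma_def e1 e2
    by (cases "ncol p x") (auto simp: csgn_def)
qed

definition sg :: "part \<Rightarrow> nat \<Rightarrow> int" where "sg p k = csgn (ncol p (at p k))"
definition H :: "part \<Rightarrow> nat \<Rightarrow> int" where "H p k = (\<Sum>j<k. sg p j)"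

lemma sigma_oint_sum:
  assumes "a \<in> points p" "b \<in> points p"
  shows "sigma p (oint p a b) = (\<Sum>k\<in>{k. k < NN p \<and> cyc (posn p a) (posn p b) k}. sg p k)"
proof -
  have "sigma p (oint p a b) = (\<Sum>x\<in>oint p a b. csgn (ncol p x))"
    by (rule sigma_sum) (meson finite_points finite_subset oint_sub)
  also have "\<dots> = (\<Sum>k\<in>{k. k < NN p \<and> cyc (posn p a) (posn p b) k}. sg p k)"
    unfolding oint_at[OF assms] sg_def
    by (rule sum.reindex_cong[where l="at p"]) (auto intro: inj_on_subset[OF inj_at])
  finally show ?thesis .
qed

lemma sum_interval: "Suc a \<le> b \<Longrightarrow> (\<Sum>k\<in>{a<..<b}. f k) = (\<Sum>k<b. f k) - (\<Sum>k<Suc a. (f k :: int))"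
proof -
  assume h: "Suc a \<le> b"
  have "{a<..<b} = {Suc a..<b}" by auto
  moreover have "(\<Sum>k<b. f k) = (\<Sum>k<Suc a. f k) + (\<Sum>k\<in>{Suc a..<b}. f k)"
    using sum.atLeastLessThan_concat[of 0 "Suc a" b f] h by (simp only: atLeast0LessThan)
  ultimately show ?thesis by simp
qed

lemma sigma_oint_H:
  assumes "a \<in> points p" "b \<in> points p" "a \<noteq> b"
  shows "sigma p (oint p a b) = H p (posn p b) - H p (Suc (posn p a)) + (if posn p b < posn p a then H p (NN p) else 0)"
proof -
  let ?a = "posn p a" and ?b = "posn p b" and ?N = "NN p"
  have ab: "?a \<noteq> ?b" using assms posn_inj by blast
  have aN: "?a < ?N" "?b < ?N" using assms posn_lt by auto
  show ?thesis
  proof (cases "?a < ?b")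
    case True
    then have "{k. k < ?N \<and> cyc ?a ?b k} = {?a<..<?b}" using aN by (auto simp: cyc_def)
    then show ?thesis using True by (simp add: sigma_oint_sum[OF assms(1,2)] sum_interval H_def)
  next
    case False
    then have lt: "?b < ?a" using ab by auto
    then have "{k. k < ?N \<and> cyc ?a ?b k} = {?a<..<?N} \<union> {..<?b}" using aN by (auto simp: cyc_def)
    moreover have "(\<Sum>k\<in>{?a<..<?N} \<union> {..<?b}. sg p k) = (\<Sum>k\<in>{?a<..<?N}. sg p k) + (\<Sum>k\<in>{..<?b}. sg p k)"
      using lt by (intro sum.union_disjoint) auto
    ultimately show ?thesis using lt aN by (simp add: sigma_oint_sum[OF assms(1,2)] sum_interval H_def)
  qed
qed



lemma sgn_flip[simp]: "csgn (flipc c) = - csgn c"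
  by (cases c) (auto simp: csgn_def)

lemma sgn_cases: "csgn c = 1 \<or> csgn c = -1" by (auto simp: csgn_def)

lemma H_Suc: "H p (Suc k) = H p k + sg p k" by (simp add: H_def)

lemma sg_posn: "x \<in> points p \<Longrightarrow> sg p (posn p x) = csgn (ncol p x)"
  by (simp add: sg_def)

lemma H_lower: "j \<le> length (loc p) \<Longrightarrow> H p j = SL (loc p) j"
  by (induction j) (auto simp: H_def SL_def sg_def at_def)

lemma H_upper:
  assumes "H p (NN p) = 0" "i \<le> length (upc p)"
  shows "H p (NN p - i) = SL (upc p) i"
  using assms(2)
proof (induction i)
  case 0 then show ?case using assms(1) by (simp add: SL_def)
next
  case (Suc i)
  let ?k = "NN p - Suc i"
  have k: "Suc ?k = NN p - i" using Suc.prems by (auto simp: NN_def)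
  have atk: "at p ?k = U i" using Suc.prems by (auto simp: at_def NN_def)
  have "H p (NN p - i) = H p ?k + sg p ?k" using H_Suc[of p ?k] k by simp
  moreover have "sg p ?k = - csgn (upc p ! i)" by (simp add: sg_def atk)
  ultimately show ?case using Suc by (simp add: SL_def)
qed

definition lvH :: "part \<Rightarrow> pt \<Rightarrow> int" where
  "lvH p x = min (H p (posn p x)) (H p (Suc (posn p x)))"

lemma lvH_lvp:
  assumes "H p (NN p) = 0" "x \<in> points p"
  shows "lvH p x = lvp p x"
proof (cases x)
  case (L j)
  then have "j < length (loc p)" using assms by (simp add: points_iff)
  then show ?thesis using L by (simp add: lvH_def H_lower lvL_def)
next
  case (U i)
  then have i: "i < length (upc p)" using assms by (simp add: points_iff)
  then have e1: "posn p x = NN p - Suc i" "Suc (posn p x) = NN p - i" using U by (auto simp: NN_def)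
  have h1: "H p (posn p x) = SL (upc p) (Suc i)" unfolding e1(1) using i by (intro H_upper[OF assms(1)]) simp
  have h2: "H p (Suc (posn p x)) = SL (upc p) i" unfolding e1(2) using i by (intro H_upper[OF assms(1)]) simp
  show ?thesis unfolding lvH_def h1 h2 using U by (simp add: lvL_def min.commute)
qed

lemma H_total: "H p (NN p) = sigma p (points p)"
proof -
  have "sigma p (points p) = (\<Sum>x\<in>points p. csgn (ncol p x))" by (simp add: sigma_sum)
  also have "\<dots> = (\<Sum>k<NN p. sg p k)" unfolding points_at_image sg_def
    by (rule sum.reindex_cong[where l="at p"]) (auto intro: inj_at)
  finally show ?thesis by (simp add: H_def)
qed

lemma P2nb_balanced:
  assumes "p \<in> P2nb"
  shows "H p (NN p) = 0"
proof -
  have wf: "partition_on (points p) (blks p)" using assms by (simp add: P2nb_def wf_part_def)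
  have fin: "finite (blks p)" using wf
    by (metis finite_UnionD finite_points partition_onD1)
  have "sigma p (points p) = (\<Sum>x\<in>points p. csgn (ncol p x))"
    by (simp add: sigma_sum)
  also have "\<dots> = (\<Sum>x\<in>\<Union>(blks p). csgn (ncol p x))"
    using partition_onD1[OF wf] by simp
  also have "\<dots> = (\<Sum>B\<in>blks p. \<Sum>x\<in>B. csgn (ncol p x))"
  proof -
    have "\<forall>A\<in>blks p. finite A"
      using partition_onD1[OF wf] by (metis Union_upper finite_points finite_subset)
    moreover have "\<forall>A\<in>blks p. \<forall>B\<in>blks p. A \<noteq> B \<longrightarrow> A \<inter> B = {}"
      using partition_onD2[OF wf] by (auto simp: disjoint_def)
    ultimately show ?thesis using sum.Union_disjoint by (metis comp_apply)
  qed
  also have "\<dots> = 0"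
  proof (rule sum.neutral, rule ballI)
    fix B assume "B \<in> blks p"
    then obtain x y where "B = {x, y}" "ncol p x = White" "ncol p y = Black"
      using assms by (auto simp: P2nb_def)
    moreover from this have "x \<noteq> y" by auto
    ultimately show "(\<Sum>x\<in>B. csgn (ncol p x)) = 0" by (auto simp: csgn_def)
  qed
  finally show ?thesis by (simp add: H_total)
qed

lemma deltap_lv:
  assumes "H p (NN p) = 0" "a \<in> points p" "b \<in> points p"
  shows "deltap p a b = lvH p b - lvH p a"
proof (cases "a = b")
  case True then show ?thesis by (simp add: deltap_def hint_def sigma_def)
next
  case False
  have so: "sigma p (oint p a b) = H p (posn p b) - H p (Suc (posn p a))"
    using sigma_oint_H[OF assms(2,3) False] assms(1) by simp
  have ha: "H p (Suc (posn p a)) = H p (posn p a) + csgn (ncol p a)"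
    using H_Suc sg_posn assms by simp
  have hb: "H p (Suc (posn p b)) = H p (posn p b) + csgn (ncol p b)"
    using H_Suc sg_posn assms by simp
  have bno: "b \<notin> oint p a b" using oint_iff[OF assms(2,3)] by (simp add: cyc_def)
  have fo: "finite (oint p a b)" by (meson finite_points finite_subset oint_sub)
  have sh: "sigma p (hint p a b) = sigma p (oint p a b) + csgn (ncol p b)"
    using False bno fo by (simp add: hint_def sigma_sum)
  have cc: "ncol p a = White \<or> ncol p a = Black" "ncol p b = White \<or> ncol p b = Black"
    by (cases "ncol p a"; simp) (cases "ncol p b"; simp)
  show ?thesis using cc unfolding deltap_def lvH_def sh so ha hb
    by (auto simp: csgn_def)
qed

lemma S0_lv_const:
  assumes "p \<in> S0" "B \<in> blks p" "u \<in> B" "v \<in> B"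
  shows "lvp p u = lvp p v"
proof -
  have P: "p \<in> P2nb" using assms by (simp add: S0_def)
  obtain x y where xy: "B = {x, y}" "ncol p x = White" "ncol p y = Black"
    using P assms by (auto simp: P2nb_def)
  have wf: "partition_on (points p) (blks p)" using P by (simp add: P2nb_def wf_part_def)
  have pts: "x \<in> points p" "y \<in> points p" using xy assms(2) partition_onD1[OF wf] by auto
  have ne: "x \<noteq> y" using xy by auto
  have "sigma p (oint p x y) = 0" using assms ne xy by (auto simp: S0_def)
  then have "deltap p x y = 0" using xy by (simp add: deltap_def)
  then have "lvH p x = lvH p y" using deltap_lv[OF P2nb_balanced[OF P] pts] by simp
  then have "lvp p x = lvp p y" using lvH_lvp[OF P2nb_balanced[OF P]] pts by simp
  then show ?thesis using assms(3,4) xy by auto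
qed

lemma balance_lists:
  assumes "p \<in> P2nb"
  shows "SL (loc p) (length (loc p)) = SL (upc p) (length (upc p))"
proof -
  have "H p (NN p - length (upc p)) = SL (upc p) (length (upc p))"
    by (rule H_upper[OF P2nb_balanced[OF assms]]) simp
  moreover have "NN p - length (upc p) = length (loc p)" by (simp add: NN_def)
  ultimately show ?thesis by (simp add: H_lower)
qed



definition betw :: "part \<Rightarrow> pt \<Rightarrow> pt \<Rightarrow> pt \<Rightarrow> bool" where
  "betw p a b c = ((posn p a < posn p c \<and> posn p c < posn p b) \<or> (posn p b < posn p c \<and> posn p c < posn p a))"

lemma crosses_elim:
  assumes "crosses p B B'" "B \<subseteq> points p" "B' \<subseteq> points p"
  shows "\<exists>a\<in>B. \<exists>b\<in>B. \<exists>c\<in>B'. \<exists>d\<in>B'. a \<noteq> b \<and> betw p a b c \<and> \<not> betw p a b d \<and> d \<noteq> a \<and> d \<noteq> b"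
proof -
  obtain a b c d where abcd: "a \<in> B" "b \<in> B" "c \<in> B'" "d \<in> B'" "c \<in> oint p a b" "d \<in> oint p b a"
    using assms(1) unfolding crosses_def by blast
  have pts: "a \<in> points p" "b \<in> points p" "c \<in> points p" "d \<in> points p" using abcd assms by auto
  have c1: "cyc (posn p a) (posn p b) (posn p c)" using oint_iff[OF pts(1,2)] abcd by simp
  have c2: "cyc (posn p b) (posn p a) (posn p d)" using oint_iff[OF pts(2,1)] abcd by simp
  have pab: "posn p a \<noteq> posn p b" using c1 by (auto simp: cyc_def)
  then have ab: "a \<noteq> b" by auto
  have pd: "posn p d \<noteq> posn p a" "posn p d \<noteq> posn p b" "posn p c \<noteq> posn p a" "posn p c \<noteq> posn p b"
    using c1 c2 pab by (cases "posn p a < posn p b"; auto simp: cyc_def)+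
  then have dn: "d \<noteq> a" "d \<noteq> b" "c \<noteq> a" "c \<noteq> b" by auto
  show ?thesis
  proof (cases "posn p a < posn p b")
    case True
    then have "betw p a b c" "\<not> betw p a b d" using c1 c2 by (auto simp: cyc_def betw_def)
    then show ?thesis using abcd ab dn by blast
  next
    case False
    then have "betw p a b d" "\<not> betw p a b c" using c1 c2 pab pd by (auto simp: cyc_def betw_def)
    then show ?thesis using abcd ab dn by blast
  qed
qed

lemma crosses_intro:
  assumes "B \<noteq> B'" "a \<in> B" "b \<in> B" "c \<in> B'" "d \<in> B'"
    "a \<in> points p" "b \<in> points p" "c \<in> points p" "d \<in> points p"
    "a \<noteq> b" "betw p a b c" "\<not> betw p a b d" "d \<noteq> a" "d \<noteq> b"
  shows "crosses p B B'"
proof -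
  have pa: "posn p a \<noteq> posn p b" "posn p d \<noteq> posn p a" "posn p d \<noteq> posn p b"
    using assms posn_inj by blast+
  show ?thesis
  proof (cases "posn p a < posn p b")
    case True
    then have "c \<in> oint p a b" "d \<in> oint p b a"
      using assms pa by (auto simp: oint_iff cyc_def betw_def)
    then show ?thesis unfolding crosses_def using assms by blast
  next
    case False
    then have "c \<in> oint p b a" "d \<in> oint p a b"
      using assms pa by (auto simp: oint_iff cyc_def betw_def)
    then show ?thesis unfolding crosses_def using assms by blast
  qed
qed

lemma crosses_transfer:
  assumes "crosses p (g ` B1) (g ` B2)" "g ` B1 \<subseteq> points p" "g ` B2 \<subseteq> points p"
    "B1 \<subseteq> points p'" "B2 \<subseteq> points p'" "B1 \<noteq> B2" "inj_on g (B1 \<union> B2)"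
    "(\<forall>x\<in>B1\<union>B2. \<forall>y\<in>B1\<union>B2. posn p (g x) < posn p (g y) \<longleftrightarrow> posn p' x < posn p' y)
     \<or> (\<forall>x\<in>B1\<union>B2. \<forall>y\<in>B1\<union>B2. posn p (g x) < posn p (g y) \<longleftrightarrow> posn p' y < posn p' x)"
  shows "crosses p' B1 B2"
proof -
  obtain a b c d where abcd: "a \<in> B1" "b \<in> B1" "c \<in> B2" "d \<in> B2" "g a \<noteq> g b"
    "betw p (g a) (g b) (g c)" "\<not> betw p (g a) (g b) (g d)" "g d \<noteq> g a" "g d \<noteq> g b"
    using crosses_elim[OF assms(1-3)] by blast
  have "betw p' a b c" "\<not> betw p' a b d"
    using assms(8) abcd unfolding betw_def by (elim disjE; simp; blast)+
  moreover have "a \<noteq> b" "d \<noteq> a" "d \<noteq> b" using abcd by auto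
  ultimately show ?thesis using abcd assms(4,5,6) by (intro crosses_intro[of B1 B2 a b c d]) auto
qed

lemma betw_parity:
  assumes "posn p a \<noteq> posn p b" "posn p v \<noteq> posn p a" "posn p v \<noteq> posn p b"
  shows "betw p a b v \<longleftrightarrow> odd (card {z \<in> {a, b}. posn p z < posn p v})"
proof -
  have ab: "a \<noteq> b" using assms by auto
  consider "posn p a < posn p v" "posn p b < posn p v" | "posn p a < posn p v" "\<not> posn p b < posn p v"
    | "\<not> posn p a < posn p v" "posn p b < posn p v" | "\<not> posn p a < posn p v" "\<not> posn p b < posn p v" by blast
  then show ?thesis
  proof cases
    case 1
    then have "{z \<in> {a, b}. posn p z < posn p v} = {a, b}" by auto
    then have e: "card {z \<in> {a, b}. posn p z < posn p v} = 2" using ab by simp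
    show ?thesis unfolding e using 1 by (simp add: betw_def)
  next
    case 2
    then have "{z \<in> {a, b}. posn p z < posn p v} = {a}" by auto
    then have e: "card {z \<in> {a, b}. posn p z < posn p v} = 1" by simp
    show ?thesis unfolding e using 2 assms by (auto simp: betw_def)
  next
    case 3
    then have "{z \<in> {a, b}. posn p z < posn p v} = {b}" by auto
    then have e: "card {z \<in> {a, b}. posn p z < posn p v} = 1" by simp
    show ?thesis unfolding e using 3 assms by (auto simp: betw_def)
  next
    case 4
    then have "{z \<in> {a, b}. posn p z < posn p v} = {}" by auto
    then have e: "card {z \<in> {a, b}. posn p z < posn p v} = 0" by simp
    show ?thesis unfolding e using 4 assms by (auto simp: betw_def)
  qed
qed



definition Cb :: "nat set \<Rightarrow> int \<Rightarrow> part set" where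
  "Cb D M = {p \<in> I_D D. \<forall>B\<in>blks p. \<forall>B'\<in>blks p. crosses p B B' \<longrightarrow> (\<forall>a\<in>B. \<forall>a'\<in>B'. \<bar>lvp p a - lvp p a'\<bar> < M)}"

lemma gen_cat_least: "is_category C \<Longrightarrow> G \<subseteq> C \<Longrightarrow> gen_cat G \<subseteq> C"
  unfolding gen_cat_def by blast

lemma gen_cat_sup: "G \<subseteq> gen_cat G"
  unfolding gen_cat_def by blast

lemma I_D_wf: "I_D D \<subseteq> {p. wf_part p}"
  by (auto simp: I_D_def S0_def P2nb_def)

lemma inter_cat:
  assumes "F \<noteq> {}" "\<And>C. C \<in> F \<Longrightarrow> is_category C"
  shows "is_category (\<Inter>F)"
  unfolding is_category_def
proof (intro conjI)
  show "\<Inter>F \<subseteq> {p. wf_part p}"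
  proof
    fix x assume "x \<in> \<Inter>F"
    moreover obtain C where "C \<in> F" using assms(1) by blast
    ultimately show "x \<in> {p. wf_part p}" using assms(2)[of C] unfolding is_category_def by blast
  qed
  show "\<forall>p\<in>\<Inter>F. \<forall>q\<in>\<Inter>F. tensor p q \<in> \<Inter>F" using assms unfolding is_category_def by auto
  show "\<forall>p\<in>\<Inter>F. invol p \<in> \<Inter>F" using assms unfolding is_category_def by auto
  show "\<forall>p\<in>\<Inter>F. \<forall>q\<in>\<Inter>F. loc q = upc p \<longrightarrow> comp p q \<in> \<Inter>F" using assms unfolding is_category_def by auto
  show "idp White \<in> \<Inter>F" "idp Black \<in> \<Inter>F" "pairWB \<in> \<Inter>F" "pairBW \<in> \<Inter>F"
    using assms unfolding is_category_def by auto
qed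

lemma gen_cat_cat:
  assumes "gen_cat G = I_D D"
  shows "is_category (I_D D)"
proof (cases "{C. is_category C \<and> G \<subseteq> C} = {}")
  case True
  then have "gen_cat G = UNIV" unfolding gen_cat_def by (metis Inter_empty)
  moreover have "\<not> wf_part (Part [] [] {{}})"
    by (simp add: wf_part_def partition_on_def)
  ultimately show ?thesis using assms I_D_wf by blast
next
  case False
  let ?F = "{C. is_category C \<and> G \<subseteq> C}"
  have "is_category (\<Inter>?F)" by (rule inter_cat) (use False in auto)
  then show ?thesis using assms by (simp add: gen_cat_def)
qed

definition wpar :: "nat set \<Rightarrow> nat \<Rightarrow> bool" where "wpar D l = (l = 0 \<or> l \<in> D)"

lemma SL_bound: "\<bar>SL cs j\<bar> \<le> int j"
proof (induction j)
  case 0 then show ?case by (simp add: SL_def)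
next
  case (Suc j)
  have "\<bar>csgn (cs ! j)\<bar> = 1" by (simp add: csgn_def)
  then show ?case using Suc by (simp add: SL_def)
qed

lemma lvp_bound: "x \<in> points p \<Longrightarrow> \<bar>lvp p x\<bar> \<le> int (NN p)"
proof (cases x)
  case (L j)
  assume "x \<in> points p"
  then have "Suc j \<le> NN p" using L by (simp add: points_iff NN_def)
  then show ?thesis using L SL_bound[of "loc p" j] SL_bound[of "loc p" "Suc j"] by (simp add: lvL_def)
next
  case (U i)
  assume "x \<in> points p"
  then have "Suc i \<le> NN p" using U by (simp add: points_iff NN_def)
  then show ?thesis using U SL_bound[of "upc p" i] SL_bound[of "upc p" "Suc i"] by (simp add: lvL_def)
qed



lemma I_D_S0: "p \<in> I_D D \<Longrightarrow> p \<in> S0" by (simp add: I_D_def)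
lemma S0_P2nb: "p \<in> S0 \<Longrightarrow> p \<in> P2nb" by (simp add: S0_def)
lemma P2nb_wf: "p \<in> P2nb \<Longrightarrow> partition_on (points p) (blks p)" by (simp add: P2nb_def wf_part_def)

lemma blk_sub: "partition_on (points p) (blks p) \<Longrightarrow> B \<in> blks p \<Longrightarrow> B \<subseteq> points p"
  using partition_onD1 by blast

lemma blk_disj: "partition_on A P \<Longrightarrow> B \<in> P \<Longrightarrow> B' \<in> P \<Longrightarrow> B \<noteq> B' \<Longrightarrow> B \<inter> B' = {}"
proof -
  assume a: "partition_on A P" "B \<in> P" "B' \<in> P" "B \<noteq> B'"
  then have "disjnt B B'" using partition_onD2[OF a(1)] by (simp add: pairwise_def)
  then show ?thesis by (simp add: disjnt_def)
qed

lemma Cb_I: "p \<in> I_D D \<Longrightarrow> (\<And>B B' a a'. B \<in> blks p \<Longrightarrow> B' \<in> blks p \<Longrightarrow> crosses p B B' \<Longrightarrow> a \<in> B \<Longrightarrow> a' \<in> B' \<Longrightarrow> \<bar>lvp p a - lvp p a'\<bar> < M) \<Longrightarrow> p \<in> Cb D M"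
  unfolding Cb_def by blast

lemma Cb_D: "p \<in> Cb D M \<Longrightarrow> B \<in> blks p \<Longrightarrow> B' \<in> blks p \<Longrightarrow> crosses p B B' \<Longrightarrow> a \<in> B \<Longrightarrow> a' \<in> B' \<Longrightarrow> \<bar>lvp p a - lvp p a'\<bar> < M"
  unfolding Cb_def by blast

lemma Cb_ID: "p \<in> Cb D M \<Longrightarrow> p \<in> I_D D" unfolding Cb_def by blast


lemma lvp_swap: "lvp (invol p) (swap_pt x) = lvp p x"
  by (cases x) (auto simp: invol_def)

lemma swap_points: "x \<in> points p \<Longrightarrow> swap_pt x \<in> points (invol p)"
  by (cases x) (auto simp: invol_def points_iff)

lemma posn_swap: "x \<in> points p \<Longrightarrow> posn (invol p) (swap_pt x) = NN p - 1 - posn p x"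
  by (cases x) (auto simp: invol_def points_iff NN_def)

lemma swap_inj: "inj swap_pt"
proof (rule injI)
  fix x y show "swap_pt x = swap_pt y \<Longrightarrow> x = y" by (cases x; cases y) auto
qed

lemma Cb_invol:
  assumes cat: "is_category (I_D D)" and p: "p \<in> Cb D M"
  shows "invol p \<in> Cb D M"
proof (rule Cb_I)
  have pI: "p \<in> I_D D" using p Cb_ID by blast
  then show "invol p \<in> I_D D" using cat by (simp add: is_category_def)
  have wf: "partition_on (points p) (blks p)" using pI I_D_S0 S0_P2nb P2nb_wf by blast
  fix B B' a a' assume B: "B \<in> blks (invol p)" "B' \<in> blks (invol p)" "crosses (invol p) B B'" "a \<in> B" "a' \<in> B'"
  obtain B0 where B0: "B0 \<in> blks p" "B = swap_pt ` B0" using B by (auto simp: invol_def)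
  obtain B0' where B0': "B0' \<in> blks p" "B' = swap_pt ` B0'" using B by (auto simp: invol_def)
  have s0: "B0 \<subseteq> points p" "B0' \<subseteq> points p" using B0 B0' blk_sub[OF wf] by auto
  have ne: "B0 \<noteq> B0'" using B B0 B0' by (auto simp: crosses_def)
  have "crosses p B0 B0'"
  proof (rule crosses_transfer[where g = swap_pt and p = "invol p"])
    show "crosses (invol p) (swap_pt ` B0) (swap_pt ` B0')" using B B0 B0' by simp
    show "swap_pt ` B0 \<subseteq> points (invol p)" "swap_pt ` B0' \<subseteq> points (invol p)" using s0 swap_points by auto
    show "B0 \<subseteq> points p" "B0' \<subseteq> points p" "B0 \<noteq> B0'" by (fact s0(1), fact s0(2), fact ne)
    show "inj_on swap_pt (B0 \<union> B0')" using swap_inj by (auto intro: inj_on_subset)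
    have "\<forall>x\<in>B0 \<union> B0'. \<forall>y\<in>B0 \<union> B0'. posn (invol p) (swap_pt x) < posn (invol p) (swap_pt y) \<longleftrightarrow> posn p y < posn p x"
    proof (intro ballI)
      fix x y assume "x \<in> B0 \<union> B0'" "y \<in> B0 \<union> B0'"
      then have "x \<in> points p" "y \<in> points p" using s0 by auto
      then show "posn (invol p) (swap_pt x) < posn (invol p) (swap_pt y) \<longleftrightarrow> posn p y < posn p x"
        using posn_swap posn_lt by fastforce
    qed
    then show "(\<forall>x\<in>B0 \<union> B0'. \<forall>y\<in>B0 \<union> B0'. posn (invol p) (swap_pt x) < posn (invol p) (swap_pt y) \<longleftrightarrow> posn p x < posn p y) \<or>
    (\<forall>x\<in>B0 \<union> B0'. \<forall>y\<in>B0 \<union> B0'. posn (invol p) (swap_pt x) < posn (invol p) (swap_pt y) \<longleftrightarrow> posn p y < posn p x)" by blast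
  qed
  moreover obtain a0 a0' where "a0 \<in> B0" "a = swap_pt a0" "a0' \<in> B0'" "a' = swap_pt a0'" using B B0 B0' by auto
  ultimately show "\<bar>lvp (invol p) a - lvp (invol p) a'\<bar> < M"
    using Cb_D[OF p B0(1) B0'(1)] by (simp add: lvp_swap)
qed



lemma SL_append1: "j \<le> length xs \<Longrightarrow> SL (xs @ ys) j = SL xs j"
  by (induction j) (auto simp: SL_def nth_append)

lemma SL_append2: "SL (xs @ ys) (length xs + j) = SL xs (length xs) + SL ys j"
  by (induction j) (auto simp: SL_def nth_append)

lemma lvL_append1: "j < length xs \<Longrightarrow> lvL (xs @ ys) j = lvL xs j"
  by (simp add: lvL_def SL_append1)

lemma lvL_append2: "lvL (xs @ ys) (length xs + j) = SL xs (length xs) + lvL ys j"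
  using SL_append2[of xs ys j] SL_append2[of xs ys "Suc j"] by (simp add: lvL_def)

abbreviation sh :: "part \<Rightarrow> pt \<Rightarrow> pt" where
  "sh p \<equiv> shift_pt (length (upc p)) (length (loc p))"

lemma tensor_simps: "upc (tensor p q) = upc p @ upc q" "loc (tensor p q) = loc p @ loc q"
  "blks (tensor p q) = blks p \<union> image (sh p) ` blks q"
  by (simp_all add: tensor_def)

lemma lvp_tensor_p: "x \<in> points p \<Longrightarrow> lvp (tensor p q) x = lvp p x"
  by (cases x) (auto simp: tensor_simps points_iff lvL_append1)

lemma lvp_tensor_q:
  assumes "p \<in> P2nb" "y \<in> points q"
  shows "lvp (tensor p q) (sh p y) = lvp q y + SL (loc p) (length (loc p))"
proof (cases y)
  case (L j) then show ?thesis
    by (simp add: tensor_simps lvL_append2[of "loc p" "loc q" j, simplified add.commute])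
next
  case (U i) then show ?thesis
    using balance_lists[OF assms(1)] lvL_append2[of "upc p" "upc q" i]
    by (simp add: tensor_simps add.commute)
qed

lemma points_tensor_p: "x \<in> points p \<Longrightarrow> x \<in> points (tensor p q)"
  by (cases x) (auto simp: points_iff tensor_simps)

lemma points_tensor_q: "y \<in> points q \<Longrightarrow> sh p y \<in> points (tensor p q)"
  by (cases y) (auto simp: points_iff tensor_simps)

lemma posn_tensor_p: "x \<in> points p \<Longrightarrow> posn (tensor p q) x = (if posn p x < length (loc p) then posn p x else posn p x + NN q)"
  by (cases x) (auto simp: points_iff tensor_simps NN_def)

lemma posn_tensor_q': "y \<in> points q \<Longrightarrow> posn (tensor p q) (sh p y) = length (loc p) + posn q y"
  by (cases y) (auto simp: points_iff tensor_simps NN_def)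

lemma sh_inj: "inj (sh p)"
proof (rule injI)
  fix x y show "sh p x = sh p y \<Longrightarrow> x = y" by (cases x; cases y) auto
qed

lemma Cb_tensor:
  assumes cat: "is_category (I_D D)" and p: "p \<in> Cb D M" and q: "q \<in> Cb D M"
  shows "tensor p q \<in> Cb D M"
proof (rule Cb_I)
  let ?t = "tensor p q" and ?n = "length (loc p)" and ?Nq = "NN q"
  have pI: "p \<in> I_D D" and qI: "q \<in> I_D D" using p q Cb_ID by blast+
  then show tI: "?t \<in> I_D D" using cat by (simp add: is_category_def)
  have pP: "p \<in> P2nb" and qP: "q \<in> P2nb" using pI qI I_D_S0 S0_P2nb by blast+
  have wfp: "partition_on (points p) (blks p)" and wfq: "partition_on (points q) (blks q)"
    using pP qP P2nb_wf by blast+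
  have wft: "partition_on (points ?t) (blks ?t)" using tI I_D_S0 S0_P2nb P2nb_wf by blast
  have ppos: "posn ?t x < ?n \<or> ?n + ?Nq \<le> posn ?t x" if "x \<in> points p" for x
    using posn_tensor_p[OF that, of q] by auto
  have qpos: "?n \<le> posn ?t (sh p y) \<and> posn ?t (sh p y) < ?n + ?Nq" if "y \<in> points q" for y
    using posn_tensor_q'[OF that, of p] posn_lt[OF that] by auto
  fix B B' a a' assume B: "B \<in> blks ?t" "B' \<in> blks ?t" "crosses ?t B B'" "a \<in> B" "a' \<in> B'"
  have Bs: "B \<subseteq> points ?t" "B' \<subseteq> points ?t" using B blk_sub[OF wft] by auto
  have ne: "B \<noteq> B'" using B by (auto simp: crosses_def)
  obtain x1 x2 y1 y2 where xy: "x1 \<in> B" "x2 \<in> B" "y1 \<in> B'" "y2 \<in> B'" "x1 \<noteq> x2"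
    "betw ?t x1 x2 y1" "\<not> betw ?t x1 x2 y2" "y2 \<noteq> x1" "y2 \<noteq> x2"
    using crosses_elim[OF B(3) Bs] by blast
  consider "B \<in> blks p" "B' \<in> blks p" | B0 where "B \<in> blks p" "B0 \<in> blks q" "B' = sh p ` B0"
    | B0 where "B0 \<in> blks q" "B = sh p ` B0" "B' \<in> blks p"
    | B0 B0' where "B0 \<in> blks q" "B = sh p ` B0" "B0' \<in> blks q" "B' = sh p ` B0'"
    using B(1,2) by (auto simp: tensor_simps)
  then show "\<bar>lvp ?t a - lvp ?t a'\<bar> < M"
  proof cases
    case 1
    have s0: "B \<subseteq> points p" "B' \<subseteq> points p" using 1 blk_sub[OF wfp] by auto
    have "crosses p B B'"
    proof (rule crosses_transfer[where g = id and p = ?t])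
      show "crosses ?t (id ` B) (id ` B')" using B by simp
      show "id ` B \<subseteq> points ?t" "id ` B' \<subseteq> points ?t" using Bs by auto
      show "B \<subseteq> points p" "B' \<subseteq> points p" "B \<noteq> B'" by (fact s0(1), fact s0(2), fact ne)
      show "inj_on id (B \<union> B')" by simp
      have "\<forall>x\<in>B \<union> B'. \<forall>y\<in>B \<union> B'. posn ?t (id x) < posn ?t (id y) \<longleftrightarrow> posn p x < posn p y"
      proof (intro ballI)
        fix x y assume "x \<in> B \<union> B'" "y \<in> B \<union> B'"
        then have "x \<in> points p" "y \<in> points p" using s0 by auto
        then show "posn ?t (id x) < posn ?t (id y) \<longleftrightarrow> posn p x < posn p y"
          using posn_tensor_p[of x p q] posn_tensor_p[of y p q] by auto
      qed
      then show "(\<forall>x\<in>B \<union> B'. \<forall>y\<in>B \<union> B'. posn ?t (id x) < posn ?t (id y) \<longleftrightarrow> posn p x < posn p y) \<or>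
        (\<forall>x\<in>B \<union> B'. \<forall>y\<in>B \<union> B'. posn ?t (id x) < posn ?t (id y) \<longleftrightarrow> posn p y < posn p x)" by blast
    qed
    moreover have "lvp ?t a = lvp p a" "lvp ?t a' = lvp p a'" using lvp_tensor_p s0 B(4,5) by auto
    ultimately show ?thesis using Cb_D[OF p 1 _ B(4,5)] by simp
  next
    case 2
    have s0: "B \<subseteq> points p" "B0 \<subseteq> points q" using 2 blk_sub[OF wfp] blk_sub[OF wfq] by auto
    obtain z1 z2 where z: "z1 \<in> B0" "y1 = sh p z1" "z2 \<in> B0" "y2 = sh p z2" using xy 2 by auto
    have r1: "?n \<le> posn ?t y1 \<and> posn ?t y1 < ?n + ?Nq" "?n \<le> posn ?t y2 \<and> posn ?t y2 < ?n + ?Nq"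
      using qpos z s0 by auto
    have r2: "posn ?t x1 < ?n \<or> ?n + ?Nq \<le> posn ?t x1" "posn ?t x2 < ?n \<or> ?n + ?Nq \<le> posn ?t x2"
      using ppos xy s0 by auto
    have False using xy(6,7) r1 r2 unfolding betw_def by linarith
    then show ?thesis ..
  next
    case 3
    have s0: "B' \<subseteq> points p" "B0 \<subseteq> points q" using 3 blk_sub[OF wfp] blk_sub[OF wfq] by auto
    obtain z1 z2 where z: "z1 \<in> B0" "x1 = sh p z1" "z2 \<in> B0" "x2 = sh p z2" using xy 3 by auto
    have r1: "?n \<le> posn ?t x1 \<and> posn ?t x1 < ?n + ?Nq" "?n \<le> posn ?t x2 \<and> posn ?t x2 < ?n + ?Nq"
      using qpos z s0 by auto
    have r2: "posn ?t y1 < ?n \<or> ?n + ?Nq \<le> posn ?t y1"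
      using ppos xy s0 by auto
    have False using xy(6) r1 r2 unfolding betw_def by linarith
    then show ?thesis ..
  next
    case 4
    have s0: "B0 \<subseteq> points q" "B0' \<subseteq> points q" using 4 blk_sub[OF wfq] by auto
    have ne0: "B0 \<noteq> B0'" using ne 4 by auto
    have "crosses q B0 B0'"
    proof (rule crosses_transfer[where g = "sh p" and p = ?t])
      show "crosses ?t (sh p ` B0) (sh p ` B0')" using B 4 by simp
      show "sh p ` B0 \<subseteq> points ?t" "sh p ` B0' \<subseteq> points ?t" using Bs 4 by auto
      show "B0 \<subseteq> points q" "B0' \<subseteq> points q" "B0 \<noteq> B0'" by (fact s0(1), fact s0(2), fact ne0)
      show "inj_on (sh p) (B0 \<union> B0')" using sh_inj by (auto intro: inj_on_subset)
      have "\<forall>x\<in>B0 \<union> B0'. \<forall>y\<in>B0 \<union> B0'. posn ?t (sh p x) < posn ?t (sh p y) \<longleftrightarrow> posn q x < posn q y"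
      proof (intro ballI)
        fix x y assume "x \<in> B0 \<union> B0'" "y \<in> B0 \<union> B0'"
        then have "x \<in> points q" "y \<in> points q" using s0 by auto
        then show "posn ?t (sh p x) < posn ?t (sh p y) \<longleftrightarrow> posn q x < posn q y"
          using posn_tensor_q'[of x q p] posn_tensor_q'[of y q p] by auto
      qed
      then show "(\<forall>x\<in>B0 \<union> B0'. \<forall>y\<in>B0 \<union> B0'. posn ?t (sh p x) < posn ?t (sh p y) \<longleftrightarrow> posn q x < posn q y) \<or>
        (\<forall>x\<in>B0 \<union> B0'. \<forall>y\<in>B0 \<union> B0'. posn ?t (sh p x) < posn ?t (sh p y) \<longleftrightarrow> posn q y < posn q x)" by blast
    qed
    moreover obtain a0 a0' where a0: "a0 \<in> B0" "a = sh p a0" "a0' \<in> B0'" "a' = sh p a0'" using B 4 by auto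
    moreover have "lvp ?t a = lvp q a0 + SL (loc p) ?n" "lvp ?t a' = lvp q a0' + SL (loc p) ?n"
      using lvp_tensor_q[OF pP] s0 a0 by auto
    ultimately show ?thesis using Cb_D[OF q 4(1) 4(3)] by simp
  qed
qed



lemma P2nb_pair:
  assumes "p \<in> P2nb" "B \<in> blks p"
  obtains x y where "B = {x, y}" "x \<noteq> y" "ncol p x = White" "ncol p y = Black"
proof -
  obtain x y where xy: "B = {x, y}" "ncol p x = White" "ncol p y = Black" using assms by (auto simp: P2nb_def)
  then have "x \<noteq> y" by auto
  then show thesis using that xy by blast
qed

lemma even_sum_cong:
  assumes "finite A" "\<And>x. x \<in> A \<Longrightarrow> even (f x :: nat) = even (g x :: nat)"
  shows "even (sum f A) = even (sum g A)"
proof -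
  have "even (\<Sum>x\<in>A. f x + g x)" using assms by (intro dvd_sum) auto
  then have "even (sum f A + sum g A)" by (simp add: sum.distrib)
  then show ?thesis by presburger
qed

lemma card_union_blocks:
  assumes wf: "partition_on (points p) (blks p)"
    and X: "X \<subseteq> points p" "\<forall>x0\<in>blks p. x0 \<inter> X \<noteq> {} \<longrightarrow> x0 \<subseteq> X"
  shows "card {z\<in>X. Q z} = (\<Sum>x0\<in>{x0\<in>blks p. x0 \<subseteq> X}. card {z\<in>x0. Q z})"
proof -
  have fin: "finite (blks p)" using wf by (metis finite_UnionD finite_points partition_onD1)
  have eq: "{z\<in>X. Q z} = (\<Union>x0\<in>{x0\<in>blks p. x0 \<subseteq> X}. {z\<in>x0. Q z})"
  proof (rule set_eqI)
    fix z show "z \<in> {z\<in>X. Q z} \<longleftrightarrow> z \<in> (\<Union>x0\<in>{x0\<in>blks p. x0 \<subseteq> X}. {z\<in>x0. Q z})"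
    proof
      assume "z \<in> {z\<in>X. Q z}"
      then have zX: "z \<in> X" "Q z" by auto
      then have "z \<in> \<Union>(blks p)" using X(1) partition_onD1[OF wf] by auto
      then obtain x0 where x0: "x0 \<in> blks p" "z \<in> x0" by blast
      then have "x0 \<inter> X \<noteq> {}" using zX by auto
      then have "x0 \<subseteq> X" using X(2) x0 by auto
      then show "z \<in> (\<Union>x0\<in>{x0\<in>blks p. x0 \<subseteq> X}. {z\<in>x0. Q z})" using x0 zX by auto
    next
      assume "z \<in> (\<Union>x0\<in>{x0\<in>blks p. x0 \<subseteq> X}. {z\<in>x0. Q z})"
      then show "z \<in> {z\<in>X. Q z}" by auto
    qed
  qed
  have "card (\<Union>x0\<in>{x0\<in>blks p. x0 \<subseteq> X}. {z\<in>x0. Q z}) = (\<Sum>x0\<in>{x0\<in>blks p. x0 \<subseteq> X}. card {z\<in>x0. Q z})"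
  proof (rule card_UN_disjoint)
    show "finite {x0\<in>blks p. x0 \<subseteq> X}" using fin by simp
    show "\<forall>i\<in>{x0 \<in> blks p. x0 \<subseteq> X}. finite {z \<in> i. Q z}"
    proof
      fix i assume "i \<in> {x0 \<in> blks p. x0 \<subseteq> X}"
      then have "i \<subseteq> points p" using blk_sub[OF wf] by auto
      then show "finite {z \<in> i. Q z}" using finite_subset[OF _ finite_points] by auto
    qed
    show "\<forall>i\<in>{x0 \<in> blks p. x0 \<subseteq> X}. \<forall>j\<in>{x0 \<in> blks p. x0 \<subseteq> X}. i \<noteq> j \<longrightarrow> {z \<in> i. Q z} \<inter> {z \<in> j. Q z} = {}"
    proof (intro ballI impI)
      fix i j assume "i \<in> {x0 \<in> blks p. x0 \<subseteq> X}" "j \<in> {x0 \<in> blks p. x0 \<subseteq> X}" "i \<noteq> j"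
      then have "i \<inter> j = {}" using blk_disj[OF wf, of i j] by simp
      then show "{z \<in> i. Q z} \<inter> {z \<in> j. Q z} = {}" by auto
    qed
  qed
  then show ?thesis using eq by simp
qed

lemma block_edge_parity:
  assumes P: "p \<in> P2nb"
    and X: "X \<subseteq> points p" "\<forall>x0\<in>blks p. x0 \<inter> X \<noteq> {} \<longrightarrow> x0 \<subseteq> X"
    and y0: "y0 \<in> blks p" "y1 \<in> y0" "y2 \<in> y0" "y0 \<inter> X = {}"
    and NC: "\<forall>x0\<in>blks p. x0 \<subseteq> X \<longrightarrow> \<not> crosses p x0 y0"
  shows "even (card {z\<in>X. posn p z < posn p y1}) = even (card {z\<in>X. posn p z < posn p y2})"
proof -
  have wf: "partition_on (points p) (blks p)" using P P2nb_wf by blast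
  have fin: "finite (blks p)" using wf by (metis finite_UnionD finite_points partition_onD1)
  have ys: "y1 \<in> points p" "y2 \<in> points p" using y0 blk_sub[OF wf] by auto
  have "even (\<Sum>x0\<in>{x0\<in>blks p. x0 \<subseteq> X}. card {z\<in>x0. posn p z < posn p y1})
      = even (\<Sum>x0\<in>{x0\<in>blks p. x0 \<subseteq> X}. card {z\<in>x0. posn p z < posn p y2})"
  proof (rule even_sum_cong)
    show "finite {x0\<in>blks p. x0 \<subseteq> X}" using fin by simp
    fix x0 assume x0: "x0 \<in> {x0\<in>blks p. x0 \<subseteq> X}"
    obtain a0 b0 where ab: "x0 = {a0, b0}" "a0 \<noteq> b0" using P x0 by (auto elim: P2nb_pair)
    have pts: "a0 \<in> points p" "b0 \<in> points p" using ab x0 X by auto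
    have nin: "y1 \<noteq> a0" "y1 \<noteq> b0" "y2 \<noteq> a0" "y2 \<noteq> b0" using ab x0 y0 by auto
    have pp: "posn p a0 \<noteq> posn p b0" "posn p y1 \<noteq> posn p a0" "posn p y1 \<noteq> posn p b0"
      "posn p y2 \<noteq> posn p a0" "posn p y2 \<noteq> posn p b0"
      using posn_inj[OF pts(1,2)] posn_inj[OF ys(1) pts(1)] posn_inj[OF ys(1) pts(2)]
        posn_inj[OF ys(2) pts(1)] posn_inj[OF ys(2) pts(2)] ab(2) nin by auto
    have ne: "x0 \<noteq> y0" using x0 y0 ab by auto
    have nc: "\<not> crosses p x0 y0" using NC x0 by auto
    have "betw p a0 b0 y1 = betw p a0 b0 y2"
    proof (rule ccontr)
      assume "betw p a0 b0 y1 \<noteq> betw p a0 b0 y2"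
      then have "(betw p a0 b0 y1 \<and> \<not> betw p a0 b0 y2) \<or> (betw p a0 b0 y2 \<and> \<not> betw p a0 b0 y1)" by blast
      then have "crosses p x0 y0"
      proof
        assume h: "betw p a0 b0 y1 \<and> \<not> betw p a0 b0 y2"
        show "crosses p x0 y0"
          by (rule crosses_intro[of x0 y0 a0 b0 y1 y2]) (use ne ab pts ys y0 nin h in auto)
      next
        assume h: "betw p a0 b0 y2 \<and> \<not> betw p a0 b0 y1"
        show "crosses p x0 y0"
          by (rule crosses_intro[of x0 y0 a0 b0 y2 y1]) (use ne ab pts ys y0 nin h in auto)
      qed
      then show False using nc by simp
    qed
    then show "even (card {z\<in>x0. posn p z < posn p y1}) = even (card {z\<in>x0. posn p z < posn p y2})"
      using betw_parity[OF pp(1,2,3)] betw_parity[OF pp(1,4,5)] ab by simp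
  qed
  then show ?thesis using card_union_blocks[OF wf X] by simp
qed

lemma card_before_L:
  assumes "j \<le> length (loc p)"
  shows "card {z\<in>points p. P z \<and> posn p z < j} = card {j'. j' < j \<and> P (L j')}"
proof -
  have "{z\<in>points p. P z \<and> posn p z < j} = L ` {j'. j' < j \<and> P (L j')}"
  proof safe
    fix z assume z: "z \<in> points p" "P z" "posn p z < j"
    show "z \<in> L ` {j'. j' < j \<and> P (L j')}"
    proof (cases z)
      case (L j') then show ?thesis using z by auto
    next
      case (U i) then show ?thesis using z assms by (auto simp: points_iff)
    qed
  qed (use assms in \<open>auto simp: points_iff\<close>)
  moreover have "inj L" by (auto intro: injI)
  ultimately show ?thesis by (simp add: card_image inj_on_subset)
qed

lemma card_before_U:
  assumes "i < length (upc p)"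
  shows "card {z\<in>points p. P z \<and> posn p z < posn p (U i)}
       = card {j. j < length (loc p) \<and> P (L j)} + card {i'. i < i' \<and> i' < length (upc p) \<and> P (U i')}"
proof -
  have "{z\<in>points p. P z \<and> posn p z < posn p (U i)} = L ` {j. j < length (loc p) \<and> P (L j)} \<union> U ` {i'. i < i' \<and> i' < length (upc p) \<and> P (U i')}"
  proof safe
    fix z assume z: "z \<in> points p" "P z" "posn p z < posn p (U i)" "z \<notin> U ` {i'. i < i' \<and> i' < length (upc p) \<and> P (U i')}"
    show "z \<in> L ` {j. j < length (loc p) \<and> P (L j)}"
    proof (cases z)
      case (L j') then show ?thesis using z by (auto simp: points_iff)
    next
      case (U i') then show ?thesis using z assms by (auto simp: points_iff)
    qed
  qed (use assms in \<open>auto simp: points_iff\<close>)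
  moreover have "inj L" "inj U" by (auto intro: injI)
  moreover have "L ` {j. j < length (loc p) \<and> P (L j)} \<inter> U ` {i'. i < i' \<and> i' < length (upc p) \<and> P (U i')} = {}" by auto
  ultimately show ?thesis by (simp add: card_Un_disjoint card_image inj_on_subset)
qed



lemma comp_simps: "upc (comp p q) = upc q" "loc (comp p q) = loc p"
  "blks (comp p q) = {{y \<in> points (comp p q). (outer x, outer y) \<in> (comp_edges p q)\<^sup>*} | x. x \<in> points (comp p q)}"
proof -
  have e: "points (Part (upc q) (loc p) {}) = points (comp p q)"
    by (simp add: points_def comp_def Let_def)
  show "upc (comp p q) = upc q" "loc (comp p q) = loc p" by (simp_all add: comp_def Let_def)
  show "blks (comp p q) = {{y \<in> points (comp p q). (outer x, outer y) \<in> (comp_edges p q)\<^sup>*} | x. x \<in> points (comp p q)}"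
    unfolding e[symmetric] by (simp add: comp_def Let_def)
qed

lemma E_sym: "(v, w) \<in> comp_edges p q \<Longrightarrow> (w, v) \<in> comp_edges p q"
  unfolding comp_edges_def by blast

lemma Estar_sym: "(v, w) \<in> (comp_edges p q)\<^sup>* \<Longrightarrow> (w, v) \<in> (comp_edges p q)\<^sup>*"
proof (induction rule: rtrancl_induct)
  case base then show ?case by simp
next
  case (step y z)
  then show ?case using E_sym by (meson converse_rtrancl_into_rtrancl)
qed

definition LV :: "part \<Rightarrow> part \<Rightarrow> pt + pt \<Rightarrow> int" where
  "LV p q v = (case v of Inl z \<Rightarrow> lvp q z | Inr z \<Rightarrow> lvp p z)"

lemma comp_edges_cases:
  assumes "(v, w) \<in> comp_edges p q"
  obtains (Q) x y B where "v = Inl x" "w = Inl y" "B \<in> blks q" "x \<in> B" "y \<in> B"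
  | (P) x y B where "v = Inr x" "w = Inr y" "B \<in> blks p" "x \<in> B" "y \<in> B"
  | (M1) i where "v = Inl (L i)" "w = Inr (U i)" "i < length (upc p)"
  | (M2) i where "v = Inr (U i)" "w = Inl (L i)" "i < length (upc p)"
  using assms unfolding comp_edges_def by auto

lemma E_LV:
  assumes "p \<in> S0" "q \<in> S0" "loc q = upc p" "(v, w) \<in> comp_edges p q"
  shows "LV p q v = LV p q w"
  using assms(4)
proof (cases rule: comp_edges_cases)
  case (Q x y B)
  then show ?thesis using S0_lv_const[OF assms(2) Q(3,4,5)] by (simp add: LV_def)
next
  case (P x y B)
  then show ?thesis using S0_lv_const[OF assms(1) P(3,4,5)] by (simp add: LV_def)
next
  case (M1 i)
  then show ?thesis using assms(3) by (simp add: LV_def)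
next
  case (M2 i)
  then show ?thesis using assms(3) by (simp add: LV_def)
qed

lemma Estar_LV:
  assumes "p \<in> S0" "q \<in> S0" "loc q = upc p" "(v, w) \<in> (comp_edges p q)\<^sup>*"
  shows "LV p q v = LV p q w"
  using assms(4) by (induction rule: rtrancl_induct) (use E_LV[OF assms(1-3)] in auto)

lemma LV_outer: "LV p q (outer x) = lvp (comp p q) x"
  by (cases x) (auto simp: LV_def comp_simps)

definition valid :: "part \<Rightarrow> part \<Rightarrow> pt + pt \<Rightarrow> bool" where
  "valid p q v = (case v of Inl z \<Rightarrow> z \<in> points q | Inr z \<Rightarrow> z \<in> points p)"

lemma E_valid:
  assumes "partition_on (points p) (blks p)" "partition_on (points q) (blks q)" "loc q = upc p"
    "(v, w) \<in> comp_edges p q"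
  shows "valid p q v \<and> valid p q w"
  using assms(4)
proof (cases rule: comp_edges_cases)
  case (Q x y B)
  then show ?thesis using blk_sub[OF assms(2)] by (auto simp: valid_def)
next
  case (P x y B)
  then show ?thesis using blk_sub[OF assms(1)] by (auto simp: valid_def)
next
  case (M1 i)
  then show ?thesis using assms(3) by (auto simp: valid_def points_iff)
next
  case (M2 i)
  then show ?thesis using assms(3) by (auto simp: valid_def points_iff)
qed

lemma outer_valid: "x \<in> points (comp p q) \<Longrightarrow> valid p q (outer x)"
  by (cases x) (auto simp: valid_def points_iff comp_simps)

lemma Estar_valid:
  assumes "partition_on (points p) (blks p)" "partition_on (points q) (blks q)" "loc q = upc p"
    "(v, w) \<in> (comp_edges p q)\<^sup>*" "valid p q v"
  shows "valid p q w"
  using assms(4,5) by (induction rule: rtrancl_induct) (use E_valid[OF assms(1-3)] in auto)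

lemma mid_edge: "i < length (upc p) \<Longrightarrow> (Inl (L i), Inr (U i)) \<in> comp_edges p q"
  unfolding comp_edges_def by simp

lemma blk_edge_q: "B \<in> blks q \<Longrightarrow> x \<in> B \<Longrightarrow> y \<in> B \<Longrightarrow> (Inl x, Inl y) \<in> comp_edges p q"
  unfolding comp_edges_def by auto

lemma blk_edge_p: "B \<in> blks p \<Longrightarrow> x \<in> B \<Longrightarrow> y \<in> B \<Longrightarrow> (Inr x, Inr y) \<in> comp_edges p q"
  unfolding comp_edges_def by auto



lemma comp_cross:
  assumes pS: "p \<in> S0" and qS: "q \<in> S0" and lq: "loc q = upc p"
    and rP: "comp p q \<in> P2nb"
    and B: "B1 \<in> blks (comp p q)" "B2 \<in> blks (comp p q)" "crosses (comp p q) B1 B2"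
  shows "\<exists>a\<in>B1. \<exists>c\<in>B2.
    (\<exists>x\<in>blks p. \<exists>y\<in>blks p. crosses p x y \<and> Inr ` x \<subseteq> {v. (outer a, v) \<in> (comp_edges p q)\<^sup>*} \<and> Inr ` y \<subseteq> {v. (outer c, v) \<in> (comp_edges p q)\<^sup>*})
  \<or> (\<exists>x\<in>blks q. \<exists>y\<in>blks q. crosses q x y \<and> Inl ` x \<subseteq> {v. (outer a, v) \<in> (comp_edges p q)\<^sup>*} \<and> Inl ` y \<subseteq> {v. (outer c, v) \<in> (comp_edges p q)\<^sup>*})"
proof (rule ccontr)
  assume NC: "\<not> ?thesis"
  define r where "r = comp p q"
  define E where "E = comp_edges p q"
  have pP: "p \<in> P2nb" and qP: "q \<in> P2nb" using pS qS S0_P2nb by blast+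
  have wfp: "partition_on (points p) (blks p)" and wfq: "partition_on (points q) (blks q)"
    and wfr: "partition_on (points r) (blks r)" using pP qP rP P2nb_wf r_def by blast+
  have Bs: "B1 \<subseteq> points r" "B2 \<subseteq> points r" using B blk_sub[OF wfr] r_def by auto
  obtain a b c d where abcd: "a \<in> B1" "b \<in> B1" "c \<in> B2" "d \<in> B2" "a \<noteq> b"
    "betw r a b c" "\<not> betw r a b d" "d \<noteq> a" "d \<noteq> b"
    using crosses_elim[OF B(3)] Bs r_def by blast
  have B1ab: "B1 = {a, b}"
  proof -
    obtain x y where "B1 = {x, y}" using rP B(1) by (auto elim: P2nb_pair)
    then show ?thesis using abcd by auto
  qed
  have ne: "B1 \<noteq> B2" using B(3) by (auto simp: crosses_def)
  have disj: "B1 \<inter> B2 = {}" using blk_disj[OF wfr] B ne r_def by auto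
  have ESs: "(v, w) \<in> E\<^sup>* \<Longrightarrow> (w, v) \<in> E\<^sup>*" for v w using Estar_sym E_def by blast
  have blkchar: "\<forall>y\<in>points r. y \<in> Bx \<longleftrightarrow> (outer z, outer y) \<in> E\<^sup>*" if hB: "Bx \<in> blks r" and hz: "z \<in> Bx" for Bx z
  proof -
    obtain x0 where x0: "x0 \<in> points r" "Bx = {y \<in> points r. (outer x0, outer y) \<in> E\<^sup>*}"
      using hB unfolding r_def E_def comp_simps by blast
    then have "(outer x0, outer z) \<in> E\<^sup>*" using hz by auto
    show ?thesis
    proof
      fix y assume y: "y \<in> points r"
      show "y \<in> Bx \<longleftrightarrow> (outer z, outer y) \<in> E\<^sup>*"
      proof
        assume "y \<in> Bx"
        then have "(outer x0, outer y) \<in> E\<^sup>*" using x0 by auto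
        moreover have "(outer z, outer x0) \<in> E\<^sup>*" using ESs \<open>(outer x0, outer z) \<in> E\<^sup>*\<close> by blast
        ultimately show "(outer z, outer y) \<in> E\<^sup>*" using rtrancl_trans by metis
      next
        assume "(outer z, outer y) \<in> E\<^sup>*"
        then have "(outer x0, outer y) \<in> E\<^sup>*" using \<open>(outer x0, outer z) \<in> E\<^sup>*\<close> rtrancl_trans by metis
        then show "y \<in> Bx" using x0 y by auto
      qed
    qed
  qed
  define K1 where "K1 = {v. (outer a, v) \<in> E\<^sup>*}"
  define K2 where "K2 = {v. (outer c, v) \<in> E\<^sup>*}"
  have B1K: "\<forall>y\<in>points r. y \<in> B1 \<longleftrightarrow> outer y \<in> K1" using blkchar[OF _ abcd(1)] B r_def K1_def by auto
  have B2K: "\<forall>y\<in>points r. y \<in> B2 \<longleftrightarrow> outer y \<in> K2" using blkchar[OF _ abcd(3)] B r_def K2_def by auto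
  have K12: "v \<in> K1 \<Longrightarrow> v \<in> K2 \<Longrightarrow> False" for v
  proof -
    assume "v \<in> K1" "v \<in> K2"
    then have "(outer a, v) \<in> E\<^sup>*" "(v, outer c) \<in> E\<^sup>*" unfolding K1_def K2_def using ESs by auto
    then have "(outer a, outer c) \<in> E\<^sup>*" using rtrancl_trans by metis
    then have "c \<in> B1" using B1K Bs abcd(3) K1_def by auto
    then show False using disj abcd(3) by auto
  qed
  have K1cl: "v \<in> K1 \<Longrightarrow> (v, w) \<in> E \<Longrightarrow> w \<in> K1" for v w unfolding K1_def by auto
  have K2cl: "v \<in> K2 \<Longrightarrow> (v, w) \<in> E \<Longrightarrow> w \<in> K2" for v w unfolding K2_def by auto
  have K1back: "w \<in> K1 \<Longrightarrow> (v, w) \<in> E \<Longrightarrow> v \<in> K1" for v w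
  proof -
    assume "w \<in> K1" "(v, w) \<in> E"
    then have "(w, v) \<in> E" using E_sym unfolding E_def by metis
    then show "v \<in> K1" using K1cl \<open>w \<in> K1\<close> by metis
  qed
  have mid: "i < length (upc p) \<Longrightarrow> Inl (L i) \<in> K1 \<longleftrightarrow> Inr (U i) \<in> K1" for i
  proof -
    assume "i < length (upc p)"
    then have "(Inl (L i), Inr (U i)) \<in> E" using mid_edge unfolding E_def by metis
    then show ?thesis using K1cl K1back by metis
  qed
  have NCp: "\<forall>x\<in>blks p. \<forall>y\<in>blks p. Inr ` x \<subseteq> K1 \<longrightarrow> Inr ` y \<subseteq> K2 \<longrightarrow> \<not> crosses p x y"
  proof (intro ballI impI notI)
    fix x y assume h: "x \<in> blks p" "y \<in> blks p" "Inr ` x \<subseteq> K1" "Inr ` y \<subseteq> K2" "crosses p x y"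
    have ex: "\<exists>x\<in>blks p. \<exists>y\<in>blks p. crosses p x y \<and> Inr ` x \<subseteq> {v. (outer a, v) \<in> (comp_edges p q)\<^sup>*} \<and> Inr ` y \<subseteq> {v. (outer c, v) \<in> (comp_edges p q)\<^sup>*}"
      by (rule bexI[of _ x], rule bexI[of _ y]) (use h in \<open>auto simp: K1_def K2_def E_def\<close>)
    have "\<exists>a\<in>B1. \<exists>c\<in>B2.
    (\<exists>x\<in>blks p. \<exists>y\<in>blks p. crosses p x y \<and> Inr ` x \<subseteq> {v. (outer a, v) \<in> (comp_edges p q)\<^sup>*} \<and> Inr ` y \<subseteq> {v. (outer c, v) \<in> (comp_edges p q)\<^sup>*})
  \<or> (\<exists>x\<in>blks q. \<exists>y\<in>blks q. crosses q x y \<and> Inl ` x \<subseteq> {v. (outer a, v) \<in> (comp_edges p q)\<^sup>*} \<and> Inl ` y \<subseteq> {v. (outer c, v) \<in> (comp_edges p q)\<^sup>*})"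
      by (rule bexI[of _ a], rule bexI[of _ c], rule disjI1) (use abcd ex in auto)
    then show False using NC by contradiction
  qed
  have NCq: "\<forall>x\<in>blks q. \<forall>y\<in>blks q. Inl ` x \<subseteq> K1 \<longrightarrow> Inl ` y \<subseteq> K2 \<longrightarrow> \<not> crosses q x y"
  proof (intro ballI impI notI)
    fix x y assume h: "x \<in> blks q" "y \<in> blks q" "Inl ` x \<subseteq> K1" "Inl ` y \<subseteq> K2" "crosses q x y"
    have ex: "\<exists>x\<in>blks q. \<exists>y\<in>blks q. crosses q x y \<and> Inl ` x \<subseteq> {v. (outer a, v) \<in> (comp_edges p q)\<^sup>*} \<and> Inl ` y \<subseteq> {v. (outer c, v) \<in> (comp_edges p q)\<^sup>*}"
      by (rule bexI[of _ x], rule bexI[of _ y]) (use h in \<open>auto simp: K1_def K2_def E_def\<close>)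
    have "\<exists>a\<in>B1. \<exists>c\<in>B2.
    (\<exists>x\<in>blks p. \<exists>y\<in>blks p. crosses p x y \<and> Inr ` x \<subseteq> {v. (outer a, v) \<in> (comp_edges p q)\<^sup>*} \<and> Inr ` y \<subseteq> {v. (outer c, v) \<in> (comp_edges p q)\<^sup>*})
  \<or> (\<exists>x\<in>blks q. \<exists>y\<in>blks q. crosses q x y \<and> Inl ` x \<subseteq> {v. (outer a, v) \<in> (comp_edges p q)\<^sup>*} \<and> Inl ` y \<subseteq> {v. (outer c, v) \<in> (comp_edges p q)\<^sup>*})"
      by (rule bexI[of _ a], rule bexI[of _ c], rule disjI2) (use abcd ex in auto)
    then show False using NC by contradiction
  qed
  define cL where "cL = card {j. j < length (loc p) \<and> Inr (L j) \<in> K1}"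
  define cU where "cU = card {i. i < length (upc p) \<and> Inr (U i) \<in> K1}"
  define f where "f v = (case v of Inr z \<Rightarrow> card {z'\<in>points p. Inr z' \<in> K1 \<and> posn p z' < posn p z}
      | Inl z \<Rightarrow> card {z'\<in>points q. Inl z' \<in> K1 \<and> posn q z' < posn q z} + cL + cU)" for v
  have Xcl: "\<forall>x0\<in>blks q. x0 \<inter> {z\<in>points q. Inl z \<in> K1} \<noteq> {} \<longrightarrow> x0 \<subseteq> {z\<in>points q. Inl z \<in> K1}"
  proof (intro ballI impI subsetI)
    fix x0 z' assume h: "x0 \<in> blks q" "x0 \<inter> {z\<in>points q. Inl z \<in> K1} \<noteq> {}" "z' \<in> x0"
    then obtain z where z: "z \<in> x0" "Inl z \<in> K1" by auto
    have "(Inl z, Inl z') \<in> E" using blk_edge_q[OF h(1) z(1) h(3)] E_def by simp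
    then have "Inl z' \<in> K1" using K1cl z(2) by blast
    moreover have "z' \<in> points q" using blk_sub[OF wfq h(1)] h(3) by auto
    ultimately show "z' \<in> {z\<in>points q. Inl z \<in> K1}" by simp
  qed
  have Xclp: "\<forall>x0\<in>blks p. x0 \<inter> {z\<in>points p. Inr z \<in> K1} \<noteq> {} \<longrightarrow> x0 \<subseteq> {z\<in>points p. Inr z \<in> K1}"
  proof (intro ballI impI subsetI)
    fix x0 z' assume h: "x0 \<in> blks p" "x0 \<inter> {z\<in>points p. Inr z \<in> K1} \<noteq> {}" "z' \<in> x0"
    then obtain z where z: "z \<in> x0" "Inr z \<in> K1" by auto
    have "(Inr z, Inr z') \<in> E" using blk_edge_p[OF h(1) z(1) h(3)] E_def by simp
    then have "Inr z' \<in> K1" using K1cl z(2) by blast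
    moreover have "z' \<in> points p" using blk_sub[OF wfp h(1)] h(3) by auto
    ultimately show "z' \<in> {z\<in>points p. Inr z \<in> K1}" by simp
  qed
  have cUsplit: "cU = card {j. j < i \<and> Inr (U j) \<in> K1} + card {i'. i < i' \<and> i' < length (upc p) \<and> Inr (U i') \<in> K1}"
    if "i < length (upc p)" "Inr (U i) \<notin> K1" for i
  proof -
    have "{i'. i' < length (upc p) \<and> Inr (U i') \<in> K1} = {j. j < i \<and> Inr (U j) \<in> K1} \<union> {i'. i < i' \<and> i' < length (upc p) \<and> Inr (U i') \<in> K1}"
    proof (intro set_eqI iffI)
      fix x assume hx: "x \<in> {i'. i' < length (upc p) \<and> Inr (U i') \<in> K1}"
      then have "x \<noteq> i" using that(2) by auto
      then show "x \<in> {j. j < i \<and> Inr (U j) \<in> K1} \<union> {i'. i < i' \<and> i' < length (upc p) \<and> Inr (U i') \<in> K1}"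
        using hx by auto
    qed (use that in auto)
    moreover have "card ({j. j < i \<and> Inr (U j) \<in> K1} \<union> {i'. i < i' \<and> i' < length (upc p) \<and> Inr (U i') \<in> K1})
        = card {j. j < i \<and> Inr (U j) \<in> K1} + card {i'. i < i' \<and> i' < length (upc p) \<and> Inr (U i') \<in> K1}"
      by (rule card_Un_disjoint) auto
    ultimately show ?thesis unfolding cU_def by simp
  qed
  have alpha: "card {j. j < i \<and> Inl (L j) \<in> K1} = card {j. j < i \<and> Inr (U j) \<in> K1}" if "i \<le> length (upc p)" for i
  proof -
    have "{j. j < i \<and> Inl (L j) \<in> K1} = {j. j < i \<and> Inr (U j) \<in> K1}"
    proof (rule Collect_cong)
      fix j show "(j < i \<and> Inl (L j) \<in> K1) = (j < i \<and> Inr (U j) \<in> K1)" using mid[of j] that by auto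
    qed
    then show ?thesis by simp
  qed
  have step: "v \<in> K2 \<Longrightarrow> (v, w) \<in> E \<Longrightarrow> even (f v) = even (f w)" for v w
  proof -
    assume hv: "v \<in> K2" and e: "(v, w) \<in> E"
    from e have e': "(v, w) \<in> comp_edges p q" using E_def by simp
    then show ?thesis
    proof (cases rule: comp_edges_cases)
      case (Q x y B0)
      have B0K2: "Inl z \<in> K2" if "z \<in> B0" for z
        using blk_edge_q[OF Q(3) Q(4) that] E_def K2cl hv Q(1) by auto
      have B0X: "B0 \<inter> {z\<in>points q. Inl z \<in> K1} = {}" using B0K2 K12 by auto
      have nc: "\<forall>x0\<in>blks q. x0 \<subseteq> {z\<in>points q. Inl z \<in> K1} \<longrightarrow> \<not> crosses q x0 B0"
      proof (intro ballI impI)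
        fix x0 assume x0: "x0 \<in> blks q" "x0 \<subseteq> {z\<in>points q. Inl z \<in> K1}"
        have h1: "Inl ` x0 \<subseteq> K1" using x0(2) by auto
        have h2: "Inl ` B0 \<subseteq> K2" using B0K2 by auto
        show "\<not> crosses q x0 B0" using NCq[rule_format, OF x0(1) Q(3) h1 h2] .
      qed
      have "even (card {z\<in>{z\<in>points q. Inl z \<in> K1}. posn q z < posn q x}) = even (card {z\<in>{z\<in>points q. Inl z \<in> K1}. posn q z < posn q y})"
        by (rule block_edge_parity[OF qP _ Xcl Q(3) Q(4) Q(5) B0X nc]) auto
      moreover have "{z\<in>{z\<in>points q. Inl z \<in> K1}. posn q z < posn q x} = {z'\<in>points q. Inl z' \<in> K1 \<and> posn q z' < posn q x}" by auto
      moreover have "{z\<in>{z\<in>points q. Inl z \<in> K1}. posn q z < posn q y} = {z'\<in>points q. Inl z' \<in> K1 \<and> posn q z' < posn q y}" by auto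
      ultimately show ?thesis unfolding f_def using Q(1,2) by simp
    next
      case (P x y B0)
      have B0K2: "Inr z \<in> K2" if "z \<in> B0" for z
        using blk_edge_p[OF P(3) P(4) that] E_def K2cl hv P(1) by auto
      have B0X: "B0 \<inter> {z\<in>points p. Inr z \<in> K1} = {}" using B0K2 K12 by auto
      have nc: "\<forall>x0\<in>blks p. x0 \<subseteq> {z\<in>points p. Inr z \<in> K1} \<longrightarrow> \<not> crosses p x0 B0"
      proof (intro ballI impI)
        fix x0 assume x0: "x0 \<in> blks p" "x0 \<subseteq> {z\<in>points p. Inr z \<in> K1}"
        have h1: "Inr ` x0 \<subseteq> K1" using x0(2) by auto
        have h2: "Inr ` B0 \<subseteq> K2" using B0K2 by auto
        show "\<not> crosses p x0 B0" using NCp[rule_format, OF x0(1) P(3) h1 h2] .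
      qed
      have "even (card {z\<in>{z\<in>points p. Inr z \<in> K1}. posn p z < posn p x}) = even (card {z\<in>{z\<in>points p. Inr z \<in> K1}. posn p z < posn p y})"
        by (rule block_edge_parity[OF pP _ Xclp P(3) P(4) P(5) B0X nc]) auto
      moreover have "{z\<in>{z\<in>points p. Inr z \<in> K1}. posn p z < posn p x} = {z'\<in>points p. Inr z' \<in> K1 \<and> posn p z' < posn p x}" by auto
      moreover have "{z\<in>{z\<in>points p. Inr z \<in> K1}. posn p z < posn p y} = {z'\<in>points p. Inr z' \<in> K1 \<and> posn p z' < posn p y}" by auto
      ultimately show ?thesis unfolding f_def using P(1,2) by simp
    next
      case (M1 i)
      have n1: "Inl (L i) \<notin> K1" using hv M1(1) K12 by auto
      then have n2: "Inr (U i) \<notin> K1" using mid M1(3) by auto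
      have fv: "f v = card {j. j < i \<and> Inr (U j) \<in> K1} + cL + cU"
      proof -
        have "f v = card {z'\<in>points q. Inl z' \<in> K1 \<and> posn q z' < i} + cL + cU" unfolding f_def using M1(1) by simp
        also have "card {z'\<in>points q. Inl z' \<in> K1 \<and> posn q z' < i} = card {j. j < i \<and> Inl (L j) \<in> K1}"
          by (rule card_before_L) (use M1(3) lq in simp)
        finally show ?thesis using alpha[of i] M1(3) by simp
      qed
      have fw: "f w = cL + card {i'. i < i' \<and> i' < length (upc p) \<and> Inr (U i') \<in> K1}"
      proof -
        have "f w = card {z'\<in>points p. Inr z' \<in> K1 \<and> posn p z' < posn p (U i)}" unfolding f_def using M1(2) by simp
        also have "\<dots> = card {j. j < length (loc p) \<and> Inr (L j) \<in> K1} + card {i'. i < i' \<and> i' < length (upc p) \<and> Inr (U i') \<in> K1}"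
          by (rule card_before_U) (use M1(3) in simp)
        finally show ?thesis unfolding cL_def by simp
      qed
      show ?thesis using fv fw cUsplit[OF M1(3) n2] by presburger
    next
      case (M2 i)
      have n1: "Inl (L i) \<notin> K1" using hv M2(2) K12 K2cl e by auto
      then have n2: "Inr (U i) \<notin> K1" using mid M2(3) by auto
      have fv: "f w = card {j. j < i \<and> Inr (U j) \<in> K1} + cL + cU"
      proof -
        have "f w = card {z'\<in>points q. Inl z' \<in> K1 \<and> posn q z' < i} + cL + cU" unfolding f_def using M2(2) by simp
        also have "card {z'\<in>points q. Inl z' \<in> K1 \<and> posn q z' < i} = card {j. j < i \<and> Inl (L j) \<in> K1}"
          by (rule card_before_L) (use M2(3) lq in simp)
        finally show ?thesis using alpha[of i] M2(3) by simp
      qed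
      have fw: "f v = cL + card {i'. i < i' \<and> i' < length (upc p) \<and> Inr (U i') \<in> K1}"
      proof -
        have "f v = card {z'\<in>points p. Inr z' \<in> K1 \<and> posn p z' < posn p (U i)}" unfolding f_def using M2(1) by simp
        also have "\<dots> = card {j. j < length (loc p) \<and> Inr (L j) \<in> K1} + card {i'. i < i' \<and> i' < length (upc p) \<and> Inr (U i') \<in> K1}"
          by (rule card_before_U) (use M2(3) in simp)
        finally show ?thesis unfolding cL_def by simp
      qed
      show ?thesis using fv fw cUsplit[OF M2(3) n2] by presburger
    qed
  qed
  have reach: "(outer c, w) \<in> E\<^sup>* \<Longrightarrow> even (f w) = even (f (outer c))" for w
  proof (induction rule: rtrancl_induct)
    case base then show ?case by simp
  next
    case (step y z)
    then have "y \<in> K2" unfolding K2_def by simp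
    then show ?case using step \<open>y \<in> K2 \<Longrightarrow> (y, z) \<in> E \<Longrightarrow> even (f y) = even (f z)\<close> by simp
  qed
  have dK2: "(outer c, outer d) \<in> E\<^sup>*" using B2K Bs abcd(4) K2_def by auto
  have ed: "even (f (outer d)) = even (f (outer c))" using reach[OF dK2] .
  define cr where "cr y = card {z\<in>points r. outer z \<in> K1 \<and> posn r z < posn r y}" for y
  have cUq: "card {j. j < length (loc q) \<and> Inl (L j) \<in> K1} = cU"
    using alpha[of "length (upc p)"] lq unfolding cU_def by simp
  have outer_f: "even (f (outer y)) = even (cr y)" if hy: "y \<in> points r" for y
  proof (cases y)
    case (L j)
    then have j: "j < length (loc p)" using hy by (simp add: points_iff r_def comp_simps)
    have "f (outer y) = card {z'\<in>points p. Inr z' \<in> K1 \<and> posn p z' < j}" unfolding f_def using L by simp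
    also have "\<dots> = card {j'. j' < j \<and> Inr (L j') \<in> K1}" by (rule card_before_L) (use j in simp)
    also have "\<dots> = cr y"
    proof -
      have "cr y = card {z\<in>points r. outer z \<in> K1 \<and> posn r z < j}" unfolding cr_def using L by simp
      also have "\<dots> = card {j'. j' < j \<and> outer (L j') \<in> K1}"
        by (rule card_before_L[where P = "\<lambda>z. outer z \<in> K1"]) (use j in \<open>simp add: r_def comp_simps\<close>)
      finally show ?thesis by simp
    qed
    finally show ?thesis by simp
  next
    case (U i)
    then have i: "i < length (upc q)" using hy by (simp add: points_iff r_def comp_simps)
    have "f (outer y) = card {z'\<in>points q. Inl z' \<in> K1 \<and> posn q z' < posn q (U i)} + cL + cU"
      unfolding f_def using U by simp
    also have "card {z'\<in>points q. Inl z' \<in> K1 \<and> posn q z' < posn q (U i)}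
       = card {j. j < length (loc q) \<and> Inl (L j) \<in> K1} + card {i'. i < i' \<and> i' < length (upc q) \<and> Inl (U i') \<in> K1}"
      by (rule card_before_U) (use i in simp)
    finally have f1: "f (outer y) = cU + card {i'. i < i' \<and> i' < length (upc q) \<and> Inl (U i') \<in> K1} + cL + cU"
      using cUq by simp
    have "cr y = card {z\<in>points r. outer z \<in> K1 \<and> posn r z < posn r (U i)}" unfolding cr_def using U by simp
    also have "\<dots> = card {j. j < length (loc r) \<and> outer (L j) \<in> K1} + card {i'. i < i' \<and> i' < length (upc r) \<and> outer (U i') \<in> K1}"
      by (rule card_before_U[where P = "\<lambda>z. outer z \<in> K1"]) (use i in \<open>simp add: r_def comp_simps\<close>)
    finally have c1: "cr y = cL + card {i'. i < i' \<and> i' < length (upc q) \<and> Inl (U i') \<in> K1}"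
      unfolding cL_def by (simp add: r_def comp_simps)
    show ?thesis using f1 c1 by presburger
  qed
  have ptsr: "a \<in> points r" "b \<in> points r" "c \<in> points r" "d \<in> points r" using abcd Bs by auto
  have cnab: "c \<noteq> a" "c \<noteq> b" using disj abcd by auto
  have pp: "posn r a \<noteq> posn r b" "posn r c \<noteq> posn r a" "posn r c \<noteq> posn r b"
     "posn r d \<noteq> posn r a" "posn r d \<noteq> posn r b"
    using posn_inj[OF ptsr(1,2)] posn_inj[OF ptsr(3,1)] posn_inj[OF ptsr(3,2)]
      posn_inj[OF ptsr(4,1)] posn_inj[OF ptsr(4,2)] abcd(5,8,9) cnab by auto
  have abset: "{z\<in>{a, b}. posn r z < posn r y} = {z\<in>points r. outer z \<in> K1 \<and> posn r z < posn r y}" for y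
    using B1K Bs B1ab by auto
  have bc: "betw r a b c \<longleftrightarrow> odd (cr c)" using betw_parity[OF pp(1,2,3)] abset unfolding cr_def by simp
  have bd: "betw r a b d \<longleftrightarrow> odd (cr d)" using betw_parity[OF pp(1,4,5)] abset unfolding cr_def by simp
  have "even (cr c) = even (cr d)" using outer_f[OF ptsr(3)] outer_f[OF ptsr(4)] ed by simp
  then show False using bc bd abcd(6,7) by simp
qed



lemma same_block:
  assumes "B \<in> blks (comp p q)" "a \<in> B" "a0 \<in> B"
  shows "(outer a, outer a0) \<in> (comp_edges p q)\<^sup>*"
proof -
  obtain x0 where x0: "B = {y \<in> points (comp p q). (outer x0, outer y) \<in> (comp_edges p q)\<^sup>*}"
    using assms(1) unfolding comp_simps by blast
  then have "(outer x0, outer a) \<in> (comp_edges p q)\<^sup>*" "(outer x0, outer a0) \<in> (comp_edges p q)\<^sup>*"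
    using assms by auto
  then show ?thesis using Estar_sym rtrancl_trans by metis
qed

definition crossP :: "part \<Rightarrow> part \<Rightarrow> pt \<Rightarrow> pt \<Rightarrow> bool" where
  "crossP p q a c =
    ((\<exists>x\<in>blks p. \<exists>y\<in>blks p. crosses p x y \<and> Inr ` x \<subseteq> {v. (outer a, v) \<in> (comp_edges p q)\<^sup>*} \<and> Inr ` y \<subseteq> {v. (outer c, v) \<in> (comp_edges p q)\<^sup>*})
  \<or> (\<exists>x\<in>blks q. \<exists>y\<in>blks q. crosses q x y \<and> Inl ` x \<subseteq> {v. (outer a, v) \<in> (comp_edges p q)\<^sup>*} \<and> Inl ` y \<subseteq> {v. (outer c, v) \<in> (comp_edges p q)\<^sup>*}))"

lemma comp_cross':
  assumes "p \<in> S0" "q \<in> S0" "loc q = upc p" "comp p q \<in> P2nb"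
    "B1 \<in> blks (comp p q)" "B2 \<in> blks (comp p q)" "crosses (comp p q) B1 B2"
  shows "\<exists>a\<in>B1. \<exists>c\<in>B2. crossP p q a c"
  unfolding crossP_def by (rule comp_cross[OF assms])

lemma Cb_comp:
  assumes cat: "is_category (I_D D)" and p: "p \<in> Cb D M" and q: "q \<in> Cb D M" and lq: "loc q = upc p"
  shows "comp p q \<in> Cb D M"
proof (rule Cb_I)
  have pI: "p \<in> I_D D" and qI: "q \<in> I_D D" using p q Cb_ID by blast+
  then show rI: "comp p q \<in> I_D D" using cat lq by (simp add: is_category_def)
  have pS: "p \<in> S0" and qS: "q \<in> S0" using pI qI I_D_S0 by blast+
  have rP: "comp p q \<in> P2nb" using rI I_D_S0 S0_P2nb by blast
  have wfp: "partition_on (points p) (blks p)" and wfq: "partition_on (points q) (blks q)"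
    using pS qS S0_P2nb P2nb_wf by blast+
  fix B1 B2 a0 a0' assume B: "B1 \<in> blks (comp p q)" "B2 \<in> blks (comp p q)" "crosses (comp p q) B1 B2" "a0 \<in> B1" "a0' \<in> B2"
  obtain a c where ac: "a \<in> B1" "c \<in> B2" and cr0: "crossP p q a c"
    using comp_cross'[OF pS qS lq rP B(1-3)] by blast
  note cr = cr0[unfolded crossP_def]
  have l1: "lvp (comp p q) a0 = LV p q (outer a)"
    using Estar_LV[OF pS qS lq same_block[OF B(1) ac(1) B(4)]] LV_outer by metis
  have l2: "lvp (comp p q) a0' = LV p q (outer c)"
    using Estar_LV[OF pS qS lq same_block[OF B(2) ac(2) B(5)]] LV_outer by metis
  from cr show "\<bar>lvp (comp p q) a0 - lvp (comp p q) a0'\<bar> < M"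
  proof
    assume "\<exists>x\<in>blks p. \<exists>y\<in>blks p. crosses p x y \<and> Inr ` x \<subseteq> {v. (outer a, v) \<in> (comp_edges p q)\<^sup>*} \<and> Inr ` y \<subseteq> {v. (outer c, v) \<in> (comp_edges p q)\<^sup>*}"
    then obtain x y where xy: "x \<in> blks p" "y \<in> blks p" "crosses p x y"
      "Inr ` x \<subseteq> {v. (outer a, v) \<in> (comp_edges p q)\<^sup>*}" "Inr ` y \<subseteq> {v. (outer c, v) \<in> (comp_edges p q)\<^sup>*}" by blast
    obtain z where z: "z \<in> x" using xy(1) partition_onD3[OF wfp] by fastforce
    obtain z' where z': "z' \<in> y" using xy(2) partition_onD3[OF wfp] by fastforce
    have "Inr z \<in> Inr ` x" using z by simp
    then have "(outer a, Inr z) \<in> (comp_edges p q)\<^sup>*" using xy(4) by auto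
    then have la: "LV p q (outer a) = LV p q (Inr z)" by (rule Estar_LV[OF pS qS lq])
    have "Inr z' \<in> Inr ` y" using z' by simp
    then have "(outer c, Inr z') \<in> (comp_edges p q)\<^sup>*" using xy(5) by auto
    then have lc: "LV p q (outer c) = LV p q (Inr z')" by (rule Estar_LV[OF pS qS lq])
    show ?thesis using la lc l1 l2 Cb_D[OF p xy(1,2,3) z z'] by (simp add: LV_def)
  next
    assume "\<exists>x\<in>blks q. \<exists>y\<in>blks q. crosses q x y \<and> Inl ` x \<subseteq> {v. (outer a, v) \<in> (comp_edges p q)\<^sup>*} \<and> Inl ` y \<subseteq> {v. (outer c, v) \<in> (comp_edges p q)\<^sup>*}"
    then obtain x y where xy: "x \<in> blks q" "y \<in> blks q" "crosses q x y"
      "Inl ` x \<subseteq> {v. (outer a, v) \<in> (comp_edges p q)\<^sup>*}" "Inl ` y \<subseteq> {v. (outer c, v) \<in> (comp_edges p q)\<^sup>*}" by blast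
    obtain z where z: "z \<in> x" using xy(1) partition_onD3[OF wfq] by fastforce
    obtain z' where z': "z' \<in> y" using xy(2) partition_onD3[OF wfq] by fastforce
    have "Inl z \<in> Inl ` x" using z by simp
    then have "(outer a, Inl z) \<in> (comp_edges p q)\<^sup>*" using xy(4) by auto
    then have la: "LV p q (outer a) = LV p q (Inl z)" by (rule Estar_LV[OF pS qS lq])
    have "Inl z' \<in> Inl ` y" using z' by simp
    then have "(outer c, Inl z') \<in> (comp_edges p q)\<^sup>*" using xy(5) by auto
    then have lc: "LV p q (outer c) = LV p q (Inl z')" by (rule Estar_LV[OF pS qS lq])
    show ?thesis using la lc l1 l2 Cb_D[OF q xy(1,2,3) z z'] by (simp add: LV_def)
  qed
qed

lemma single_block_Cb:
  assumes "p \<in> I_D D" "\<exists>B0. blks p = {B0}"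
  shows "p \<in> Cb D M"
proof (rule Cb_I[OF assms(1)])
  fix B B' a a' assume "B \<in> blks p" "B' \<in> blks p" "crosses p B B'"
  then show "\<bar>lvp p a - lvp p a'\<bar> < M" using assms(2) by (auto simp: crosses_def)
qed

lemma Cb_cat2: "is_category (I_D D) \<Longrightarrow> is_category (Cb D M)"
proof -
  assume cat: "is_category (I_D D)"
  have base: "idp White \<in> I_D D" "idp Black \<in> I_D D" "pairWB \<in> I_D D" "pairBW \<in> I_D D"
    using cat by (simp_all add: is_category_def)
  show ?thesis unfolding is_category_def
  proof (intro conjI ballI impI)
    show "Cb D M \<subseteq> {p. wf_part p}" using I_D_wf Cb_ID by blast
    show "tensor p q \<in> Cb D M" if "p \<in> Cb D M" "q \<in> Cb D M" for p q using Cb_tensor[OF cat that] .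
    show "invol p \<in> Cb D M" if "p \<in> Cb D M" for p using Cb_invol[OF cat that] .
    show "comp p q \<in> Cb D M" if "p \<in> Cb D M" "q \<in> Cb D M" "loc q = upc p" for p q using Cb_comp[OF cat that] .
    show "idp White \<in> Cb D M" by (rule single_block_Cb[OF base(1)]) (simp add: idp_def)
    show "idp Black \<in> Cb D M" by (rule single_block_Cb[OF base(2)]) (simp add: idp_def)
    show "pairWB \<in> Cb D M" by (rule single_block_Cb[OF base(3)]) (simp add: pairWB_def)
    show "pairBW \<in> Cb D M" by (rule single_block_Cb[OF base(4)]) (simp add: pairBW_def)
  qed
qed



definition lev :: "nat \<Rightarrow> nat \<Rightarrow> nat" where
  "lev K j = (if j < K then j else if j < 2*K then 2*K-1-j else if j < 3*K then j-2*K else 4*K-1-j)"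

definition rf :: "bool \<Rightarrow> nat \<Rightarrow> nat \<Rightarrow> nat" where
  "rf b K j = (if b then (if j < 2*K then 2*K-1-j else 6*K-1-j) else 4*K-1-j)"

definition sig :: "(nat \<Rightarrow> bool) \<Rightarrow> nat \<Rightarrow> nat \<Rightarrow> nat" where
  "sig w K j = rf (w (lev K j)) K j"

lemma rf_props:
  assumes "j < 4*K"
  shows "rf b K j < 4*K" "lev K (rf b K j) = lev K j" "rf b K (rf b K j) = j" "rf b K j \<noteq> j" "lev K j < K"
proof -
  show "rf b K j < 4*K" using assms by (auto simp: rf_def)
  show "lev K (rf b K j) = lev K j" using assms by (cases b) (auto simp: rf_def lev_def)
  show "rf b K (rf b K j) = j" using assms by (cases b) (auto simp: rf_def)
  show "rf b K j \<noteq> j" using assms unfolding rf_def by (cases b; cases "j < 2*K"; simp; presburger)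
  show "lev K j < K" using assms by (auto simp: lev_def)
qed

lemma sig_props:
  assumes "j < 4*K"
  shows "sig w K j < 4*K" "lev K (sig w K j) = lev K j" "sig w K (sig w K j) = j" "sig w K j \<noteq> j"
proof -
  show "sig w K j < 4*K" "sig w K j \<noteq> j" using rf_props[OF assms] by (simp_all add: sig_def)
  show l: "lev K (sig w K j) = lev K j" using rf_props[OF assms] by (simp add: sig_def)
  show "sig w K (sig w K j) = j" using rf_props[OF assms] l by (simp add: sig_def)
qed

definition betw' :: "nat \<Rightarrow> nat \<Rightarrow> nat \<Rightarrow> bool" where
  "betw' a b c = ((a < c \<and> c < b) \<or> (b < c \<and> c < a))"

definition p1 :: "nat \<Rightarrow> nat \<Rightarrow> nat \<Rightarrow> nat" where
  "p1 t K l = (if t = 0 then l else if t = 1 then 2*K+l else if t = 2 then l else 2*K-1-l)"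
definition p2 :: "nat \<Rightarrow> nat \<Rightarrow> nat \<Rightarrow> nat" where
  "p2 t K l = (if t = 0 then 2*K-1-l else if t = 1 then 4*K-1-l else if t = 2 then 4*K-1-l else 2*K+l)"
definition btyp :: "bool \<Rightarrow> nat \<Rightarrow> nat \<Rightarrow> nat" where
  "btyp b K j = (if b then (if j < 2*K then 0 else 1) else (if j < K \<or> 3*K \<le> j then 2 else 3))"

lemma btyp_lt: "btyp b K j < 4" "btyp b K j < 2 \<longleftrightarrow> b" by (auto simp: btyp_def)

lemma block_form:
  assumes "j < 4*K"
  shows "(j = p1 (btyp b K j) K (lev K j) \<and> rf b K j = p2 (btyp b K j) K (lev K j))
       \<or> (j = p2 (btyp b K j) K (lev K j) \<and> rf b K j = p1 (btyp b K j) K (lev K j))"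
proof (cases b)
  case True
  then show ?thesis using assms unfolding btyp_def rf_def p1_def p2_def lev_def by auto
next
  case False
  then show ?thesis using assms unfolding btyp_def rf_def p1_def p2_def lev_def by auto
qed

definition bi :: "int \<Rightarrow> int \<Rightarrow> int \<Rightarrow> bool" where
  "bi a b c = ((a < c \<and> c < b) \<or> (b < c \<and> c < a))"
definition q1 :: "nat \<Rightarrow> int \<Rightarrow> int \<Rightarrow> int" where
  "q1 t K l = (if t = 0 then l else if t = 1 then 2*K+l else if t = 2 then l else 2*K-1-l)"
definition q2 :: "nat \<Rightarrow> int \<Rightarrow> int \<Rightarrow> int" where
  "q2 t K l = (if t = 0 then 2*K-1-l else if t = 1 then 4*K-1-l else if t = 2 then 4*K-1-l else 2*K+l)"

lemma typed_cross_int: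
  assumes "t < 4" "t' < 4" "0 \<le> l" "l < K" "0 \<le> l'" "l' < K"
    "l = l' \<Longrightarrow> (t < 2 \<longleftrightarrow> t' < 2)"
    "bi (q1 t K l) (q2 t K l) (q1 t' K l') \<noteq> bi (q1 t K l) (q2 t K l) (q2 t' K l')"
  shows "(t < 2 \<and> 2 \<le> t' \<and> l < l') \<or> (t' < 2 \<and> 2 \<le> t \<and> l' < l)"
proof -
  have ht: "t = 0 \<or> t = 1 \<or> t = 2 \<or> t = 3" and ht': "t' = 0 \<or> t' = 1 \<or> t' = 2 \<or> t' = 3" using assms by auto
  show ?thesis using ht ht'
    apply (elim disjE)
    apply (use assms(3-8) in \<open>simp_all add: bi_def q1_def q2_def\<close>)
    apply arith+
    done
qed

lemma p_int: "l < K \<Longrightarrow> int (p1 t K l) = q1 t (int K) (int l) \<and> int (p2 t K l) = q2 t (int K) (int l)"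
  by (auto simp: p1_def p2_def q1_def q2_def of_nat_diff)

lemma betw'_int: "betw' a b c = bi (int a) (int b) (int c)"
  by (simp add: betw'_def bi_def)

lemma betw'_sym: "betw' a b c = betw' b a c" by (auto simp: betw'_def)

lemma wit_cross:
  assumes "j < 4*K" "i < 4*K" "lev K j = lev K i \<Longrightarrow> bj = bi'"
    "betw' j (rf bj K j) i \<noteq> betw' j (rf bj K j) (rf bi' K i)"
  shows "(bj \<and> \<not> bi' \<and> lev K j < lev K i) \<or> (bi' \<and> \<not> bj \<and> lev K i < lev K j)"
proof -
  let ?t = "btyp bj K j" and ?t' = "btyp bi' K i" and ?l = "lev K j" and ?l' = "lev K i"
  have c1: "betw' j (rf bj K j) c = betw' (p1 ?t K ?l) (p2 ?t K ?l) c" for c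
    using block_form[OF assms(1), of bj] betw'_sym by auto
  have c2: "(betw' x y i \<noteq> betw' x y (rf bi' K i)) = (betw' x y (p1 ?t' K ?l') \<noteq> betw' x y (p2 ?t' K ?l'))" for x y
    using block_form[OF assms(2), of bi'] by auto
  have "betw' (p1 ?t K ?l) (p2 ?t K ?l) (p1 ?t' K ?l') \<noteq> betw' (p1 ?t K ?l) (p2 ?t K ?l) (p2 ?t' K ?l')"
    using assms(4) c1 c2 by simp
  moreover have lK: "?l < K" "?l' < K" using rf_props(5) assms(1,2) by auto
  ultimately have "bi (q1 ?t (int K) (int ?l)) (q2 ?t (int K) (int ?l)) (q1 ?t' (int K) (int ?l')) \<noteq>
      bi (q1 ?t (int K) (int ?l)) (q2 ?t (int K) (int ?l)) (q2 ?t' (int K) (int ?l'))"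
    using p_int[OF lK(1), of ?t] p_int[OF lK(2), of ?t'] by (simp add: betw'_int)
  then have "(?t < 2 \<and> 2 \<le> ?t' \<and> int ?l < int ?l') \<or> (?t' < 2 \<and> 2 \<le> ?t \<and> int ?l' < int ?l)"
    using lK btyp_lt assms(3) by (intro typed_cross_int) auto
  then show ?thesis using btyp_lt[of bj K j] btyp_lt[of bi' K i] by auto
qed



definition wlo :: "nat \<Rightarrow> color list" where
  "wlo K = replicate K White @ replicate K Black @ replicate K White @ replicate K Black"

definition wit :: "(nat \<Rightarrow> bool) \<Rightarrow> nat \<Rightarrow> part" where
  "wit w K = Part [] (wlo K) {{L j, L (sig w K j)} | j. j < 4*K}"

lemma wlo_len[simp]: "length (wlo K) = 4*K" by (simp add: wlo_def)

lemma wlo_nth: "j < 4*K \<Longrightarrow> wlo K ! j = (if j < K \<or> (2*K \<le> j \<and> j < 3*K) then White else Black)"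
  by (auto simp: wlo_def nth_append)

lemma wit_points: "points (wit w K) = {L j | j. j < 4*K}"
  by (auto simp: points_def wit_def)

lemma wit_simps: "upc (wit w K) = []" "loc (wit w K) = wlo K" "blks (wit w K) = {{L j, L (sig w K j)} | j. j < 4*K}"
  by (simp_all add: wit_def)

lemma wit_posn[simp]: "posn (wit w K) (L j) = j" by simp

definition hgt :: "nat \<Rightarrow> nat \<Rightarrow> nat" where
  "hgt K j = (if j \<le> K then j else if j \<le> 2*K then 2*K - j else if j \<le> 3*K then j - 2*K else 4*K - j)"

lemma SL_wlo: "j \<le> 4*K \<Longrightarrow> SL (wlo K) j = int (hgt K j)"
proof (induction j)
  case 0 then show ?case by (simp add: SL_def hgt_def)
next
  case (Suc j)
  then have "SL (wlo K) (Suc j) = int (hgt K j) + csgn (wlo K ! j)" by (simp add: SL_def)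
  also have "\<dots> = int (hgt K (Suc j))" using Suc.prems
    by (simp add: wlo_nth csgn_def hgt_def of_nat_diff)
  finally show ?case .
qed

lemma lvp_wit: "j < 4*K \<Longrightarrow> lvp (wit w K) (L j) = int (lev K j)"
  by (simp add: wit_simps lvL_def SL_wlo hgt_def lev_def of_nat_diff)

lemma wit_col: "j < 4*K \<Longrightarrow> wlo K ! (sig w K j) \<noteq> wlo K ! j"
proof -
  assume j: "j < 4*K"
  have s: "sig w K j < 4*K" using sig_props[OF j] by simp
  have e1: "wlo K ! (sig w K j) = (if sig w K j < K \<or> (2*K \<le> sig w K j \<and> sig w K j < 3*K) then White else Black)"
    by (rule wlo_nth[OF s])
  show ?thesis unfolding e1 wlo_nth[OF j] using j by (cases "w (lev K j)") (auto simp: sig_def rf_def)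
qed

lemma inv_partition:
  assumes "\<And>j. j < N \<Longrightarrow> s j < N \<and> s (s j) = j \<and> s j \<noteq> j"
  shows "partition_on {L j | j. j < N} {{L j, L (s j)} | j. j < N}"
proof (rule partition_onI)
  show "\<Union>{{L j, L (s j)} | j. j < N} = {L j | j. j < N}"
  proof (rule set_eqI, rule iffI)
    fix x assume "x \<in> \<Union>{{L j, L (s j)} | j. j < N}"
    then obtain j where j: "j < N" "x \<in> {L j, L (s j)}" by auto
    then have "x = L j \<or> x = L (s j)" by simp
    moreover have "s j < N" using assms j(1) by simp
    ultimately show "x \<in> {L j | j. j < N}" using j(1) by auto
  next
    fix x assume "x \<in> {L j | j. j < N}"
    then obtain j where j: "j < N" "x = L j" by auto
    then have "{L j, L (s j)} \<in> {{L j, L (s j)} | j. j < N}" by auto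
    then show "x \<in> \<Union>{{L j, L (s j)} | j. j < N}" using j by blast
  qed
  show "{} \<notin> {{L j, L (s j)} | j. j < N}" by auto
  fix P Q assume P: "P \<in> {{L j, L (s j)} | j. j < N}" and Q: "Q \<in> {{L j, L (s j)} | j. j < N}" and "P \<noteq> Q"
  obtain j where j: "j < N" "P = {L j, L (s j)}" using P by auto
  obtain i where i: "i < N" "Q = {L i, L (s i)}" using Q by auto
  have "P \<inter> Q = {}"
  proof (rule ccontr)
    assume "P \<inter> Q \<noteq> {}"
    then obtain z where z: "z \<in> P" "z \<in> Q" by blast
    have zP: "z = L j \<or> z = L (s j)" using z(1) j(2) by simp
    have zQ: "z = L i \<or> z = L (s i)" using z(2) i(2) by simp
    have ssi: "s (s i) = i" using assms i(1) by blast
    have ssj: "s (s j) = j" using assms j(1) by blast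
    from zP zQ have "j = i \<or> j = s i \<or> s j = i \<or> s j = s i" by auto
    then have "P = Q"
    proof (elim disjE)
      assume "j = i" then show "P = Q" using i(2) j(2) by simp
    next
      assume h: "j = s i"
      then have "s j = i" using ssi by simp
      then show "P = Q" using i(2) j(2) h by auto
    next
      assume h: "s j = i"
      then show "P = Q" using i(2) j(2) ssj by auto
    next
      assume h: "s j = s i"
      then have "j = i" using ssi ssj by metis
      then show "P = Q" using i(2) j(2) by simp
    qed
    then show False using \<open>P \<noteq> Q\<close> by simp
  qed
  then show "disjnt P Q" by (simp add: disjnt_def)
qed

lemma wit_wf: "partition_on (points (wit w K)) (blks (wit w K))"
  unfolding wit_points wit_simps by (rule inv_partition) (use sig_props in auto)

lemma wit_blk:
  assumes "B \<in> blks (wit w K)"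
  obtains j where "j < 4*K" "B = {L j, L (sig w K j)}"
  using assms unfolding wit_simps by blast

lemma wit_P2nb: "wit w K \<in> P2nb"
  unfolding P2nb_def
proof (intro CollectI conjI ballI)
  show "wf_part (wit w K)" using wit_wf by (simp add: wf_part_def)
  fix B assume "B \<in> blks (wit w K)"
  then obtain j where j: "j < 4*K" "B = {L j, L (sig w K j)}" by (rule wit_blk)
  have s: "sig w K j < 4*K" using sig_props[OF j(1)] by simp
  have c: "wlo K ! (sig w K j) \<noteq> wlo K ! j" by (rule wit_col[OF j(1)])
  show "\<exists>x y. B = {x, y} \<and> ncol (wit w K) x = White \<and> ncol (wit w K) y = Black"
  proof (cases "wlo K ! j")
    case White
    then have "wlo K ! (sig w K j) = Black" using c by (cases "wlo K ! (sig w K j)") auto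
    then show ?thesis using White j by (intro exI[of _ "L j"] exI[of _ "L (sig w K j)"]) (simp add: wit_simps)
  next
    case Black
    then have "wlo K ! (sig w K j) = White" using c by (cases "wlo K ! (sig w K j)") auto
    then show ?thesis using Black j by (intro exI[of _ "L (sig w K j)"] exI[of _ "L j"]) (auto simp: wit_simps)
  qed
qed

lemma lv_blk:
  assumes "j < 4*K" "x \<in> {L j, L (sig w K j)}"
  shows "lvp (wit w K) x = int (lev K j)"
proof -
  have s: "sig w K j < 4*K" "lev K (sig w K j) = lev K j" using sig_props[OF assms(1)] by auto
  from assms(2) have "x = L j \<or> x = L (sig w K j)" by simp
  then show ?thesis
  proof
    assume "x = L j" then show ?thesis using lvp_wit[OF assms(1)] by simp
  next
    assume "x = L (sig w K j)" then show ?thesis using lvp_wit[OF s(1)] s(2) by simp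
  qed
qed

lemma wit_S0: "wit w K \<in> S0"
  unfolding S0_def
proof (intro CollectI conjI ballI impI)
  show P: "wit w K \<in> P2nb" by (rule wit_P2nb)
  fix B a b assume B: "B \<in> blks (wit w K)" "a \<in> B" "b \<in> B" "a \<noteq> b"
  obtain j where j: "j < 4*K" "B = {L j, L (sig w K j)}" using B(1) by (rule wit_blk)
  have pts: "a \<in> points (wit w K)" "b \<in> points (wit w K)" using B blk_sub[OF wit_wf] by auto
  have ab: "(a = L j \<and> b = L (sig w K j)) \<or> (a = L (sig w K j) \<and> b = L j)" using B j by auto
  have "ncol (wit w K) a \<noteq> ncol (wit w K) b"
    using ab wit_col[OF j(1), of w] by (elim disjE) (simp_all add: wit_simps)
  then have "sigma (wit w K) (oint (wit w K) a b) = deltap (wit w K) a b" by (simp add: deltap_def)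
  also have "\<dots> = lvH (wit w K) b - lvH (wit w K) a" by (rule deltap_lv[OF P2nb_balanced[OF P] pts])
  also have "\<dots> = lvp (wit w K) b - lvp (wit w K) a" using lvH_lvp[OF P2nb_balanced[OF P]] pts by simp
  also have "\<dots> = 0" using lv_blk[OF j(1), of a w] lv_blk[OF j(1), of b w] B j by simp
  finally show "sigma (wit w K) (oint (wit w K) a b) = 0" .
qed



lemma Dgap:
  assumes sg: "\<forall>x\<in>D. \<forall>y\<in>D. x + y \<in> D" and "wpar D l" "\<not> wpar D l'" "l < l'"
  shows "l' - l \<notin> D"
proof
  assume h: "l' - l \<in> D"
  show False
  proof (cases "l = 0")
    case True then show ?thesis using h assms(3) by (simp add: wpar_def)
  next
    case False
    then have "l \<in> D" using assms(2) by (simp add: wpar_def)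
    then have "l + (l' - l) \<in> D" using sg h by blast
    then show ?thesis using assms(3,4) by (simp add: wpar_def)
  qed
qed

lemma wit_dp:
  assumes "B \<in> blks (wit w K)" "B' \<in> blks (wit w K)" "j < 4*K" "B = {L j, L (sig w K j)}"
    "i < 4*K" "B' = {L i, L (sig w K i)}"
  shows "dp (wit w K) B B' = nat \<bar>int (lev K i) - int (lev K j)\<bar>"
proof -
  have P: "wit w K \<in> P2nb" by (rule wit_P2nb)
  let ?a = "SOME a. a \<in> B" and ?a' = "SOME a. a \<in> B'"
  have a: "?a \<in> B" using assms(4) by (metis insertI1 someI_ex)
  have a': "?a' \<in> B'" using assms(6) by (metis insertI1 someI_ex)
  have pts: "?a \<in> points (wit w K)" "?a' \<in> points (wit w K)" using a a' assms(1,2) blk_sub[OF wit_wf] by auto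
  have "deltap (wit w K) ?a ?a' = lvH (wit w K) ?a' - lvH (wit w K) ?a"
    by (rule deltap_lv[OF P2nb_balanced[OF P] pts])
  also have "\<dots> = lvp (wit w K) ?a' - lvp (wit w K) ?a" using lvH_lvp[OF P2nb_balanced[OF P]] pts by simp
  also have "\<dots> = int (lev K i) - int (lev K j)"
    using lv_blk[OF assms(3), of ?a w] lv_blk[OF assms(5), of ?a' w] a a' assms(4,6) by simp
  finally show ?thesis by (simp add: dp_def)
qed

lemma wit_ID:
  assumes sg: "\<forall>x\<in>D. \<forall>y\<in>D. x + y \<in> D"
  shows "wit (wpar D) K \<in> I_D D"
  unfolding I_D_def
proof (intro CollectI conjI ballI impI)
  let ?p = "wit (wpar D) K"
  show "?p \<in> S0" by (rule wit_S0)
  fix B B' assume B: "B \<in> blks ?p" "B' \<in> blks ?p" "crosses ?p B B'"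
  obtain j where j: "j < 4*K" "B = {L j, L (sig (wpar D) K j)}" using B(1) by (rule wit_blk)
  obtain i where i: "i < 4*K" "B' = {L i, L (sig (wpar D) K i)}" using B(2) by (rule wit_blk)
  have Bs: "B \<subseteq> points ?p" "B' \<subseteq> points ?p" using B blk_sub[OF wit_wf] by auto
  obtain a b c d where abcd: "a \<in> B" "b \<in> B" "c \<in> B'" "d \<in> B'" "a \<noteq> b"
    "betw ?p a b c" "\<not> betw ?p a b d" "d \<noteq> a" "d \<noteq> b"
    using crosses_elim[OF B(3) Bs] by blast
  have cd: "c \<noteq> d" using abcd(6,7) by auto
  have ab: "(a = L j \<and> b = L (sig (wpar D) K j)) \<or> (a = L (sig (wpar D) K j) \<and> b = L j)" using abcd(1,2,5) j(2) by auto
  have cd2: "(c = L i \<and> d = L (sig (wpar D) K i)) \<or> (c = L (sig (wpar D) K i) \<and> d = L i)" using abcd(3,4) cd i(2) by auto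
  have bb: "betw' j (sig (wpar D) K j) i \<noteq> betw' j (sig (wpar D) K j) (sig (wpar D) K i)"
    using ab cd2 abcd(6,7) by (elim disjE) (auto simp: betw_def betw'_def)
  have "(wpar D (lev K j) \<and> \<not> wpar D (lev K i) \<and> lev K j < lev K i) \<or> (wpar D (lev K i) \<and> \<not> wpar D (lev K j) \<and> lev K i < lev K j)"
    by (rule wit_cross[OF j(1) i(1)]) (use bb in \<open>simp_all add: sig_def\<close>)
  moreover have "dp ?p B B' = nat \<bar>int (lev K i) - int (lev K j)\<bar>" by (rule wit_dp[OF B(1,2) j i])
  ultimately show "dp ?p B B' \<notin> D"
  proof (elim disjE conjE)
    assume h: "wpar D (lev K j)" "\<not> wpar D (lev K i)" "lev K j < lev K i" and e: "dp ?p B B' = nat \<bar>int (lev K i) - int (lev K j)\<bar>"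
    have "dp ?p B B' = lev K i - lev K j" using e h(3) by simp
    then show ?thesis using Dgap[OF sg h] by simp
  next
    assume h: "wpar D (lev K i)" "\<not> wpar D (lev K j)" "lev K i < lev K j" and e: "dp ?p B B' = nat \<bar>int (lev K i) - int (lev K j)\<bar>"
    have "dp ?p B B' = lev K j - lev K i" using e h(3) by simp
    then show ?thesis using Dgap[OF sg h] by simp
  qed
qed

lemma witness2:
  assumes sg: "\<forall>x\<in>D. \<forall>y\<in>D. x + y \<in> D" and k: "k \<ge> 1" "k \<notin> D"
  shows "\<exists>p\<in>I_D D. \<exists>B\<in>blks p. \<exists>B'\<in>blks p. crosses p B B' \<and> (\<exists>a\<in>B. \<exists>a'\<in>B'. \<bar>lvp p a - lvp p a'\<bar> = int k)"
proof -
  let ?K = "Suc k" and ?w = "wpar D"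
  let ?p = "wit ?w ?K"
  have l0: "lev ?K 0 = 0" by (simp add: lev_def)
  have lk: "lev ?K k = k" by (simp add: lev_def)
  have w0: "?w 0" by (simp add: wpar_def)
  have wk: "\<not> ?w k" using k by (simp add: wpar_def)
  have s0: "sig ?w ?K 0 = 2 * ?K - 1" using l0 w0 by (simp add: sig_def rf_def)
  have sk: "sig ?w ?K k = 4 * ?K - 1 - k" using lk wk by (simp add: sig_def rf_def)
  let ?B = "{L 0, L (2 * ?K - 1)}" and ?B' = "{L k, L (4 * ?K - 1 - k)}"
  have B: "?B \<in> blks ?p" unfolding wit_simps using s0 by (intro CollectI exI[of _ 0]) auto
  have B': "?B' \<in> blks ?p" unfolding wit_simps using sk by (intro CollectI exI[of _ k]) auto
  have cr: "crosses ?p ?B ?B'"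
  proof (rule crosses_intro[of ?B ?B' "L 0" "L (2 * ?K - 1)" "L k" "L (4 * ?K - 1 - k)"])
    have "L 0 \<notin> ?B'" using k by simp
    then show "?B \<noteq> ?B'" by blast
    show "L 0 \<in> points ?p" "L (2 * ?K - 1) \<in> points ?p" "L k \<in> points ?p" "L (4 * ?K - 1 - k) \<in> points ?p"
      by (simp_all add: wit_points)
    show "betw ?p (L 0) (L (2 * ?K - 1)) (L k)" using k by (simp add: betw_def)
    show "\<not> betw ?p (L 0) (L (2 * ?K - 1)) (L (4 * ?K - 1 - k))" by (simp add: betw_def)
    show "L 0 \<in> ?B" "L (2 * ?K - 1) \<in> ?B" "L k \<in> ?B'" "L (4 * ?K - 1 - k) \<in> ?B'" by simp_all
    show "L 0 \<noteq> L (2 * ?K - 1)" "L (4 * ?K - 1 - k) \<noteq> L 0" "L (4 * ?K - 1 - k) \<noteq> L (2 * ?K - 1)"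
      by simp_all
  qed
  have lv0: "lvp ?p (L 0) = 0" using lvp_wit[of 0 ?K ?w] l0 by simp
  have lvk: "lvp ?p (L k) = int k" using lvp_wit[of k ?K ?w] lk by simp
  show ?thesis
  proof (rule bexI[OF _ wit_ID[OF sg, of ?K]])
    show "\<exists>B\<in>blks ?p. \<exists>B'\<in>blks ?p. crosses ?p B B' \<and> (\<exists>a\<in>B. \<exists>a'\<in>B'. \<bar>lvp ?p a - lvp ?p a'\<bar> = int k)"
    proof (rule bexI[OF _ B], rule bexI[OF _ B'], rule conjI[OF cr])
      show "\<exists>a\<in>?B. \<exists>a'\<in>?B'. \<bar>lvp ?p a - lvp ?p a'\<bar> = int k"
        by (rule bexI[of _ "L 0"], rule bexI[of _ "L k"]) (use lv0 lvk in auto)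
    qed
  qed
qed

theorem corollary8p4:
  fixes D :: "nat set"
  assumes "\<forall>x\<in>D. \<forall>y\<in>D. x + y \<in> D"
    and "infinite ({n. n \<ge> 1} - D)"
    and "gen_cat G = I_D D"
  shows "infinite G"
proof
  assume fin: "finite G"
  have cat: "is_category (I_D D)" by (rule gen_cat_cat[OF assms(3)])
  define M where "M = 2 * int (Max (insert 0 (NN ` G))) + 1"
  have GC: "G \<subseteq> Cb D M"
  proof
    fix p assume pG: "p \<in> G"
    then have pI: "p \<in> I_D D" using gen_cat_sup assms(3) by blast
    then have wf: "partition_on (points p) (blks p)" using I_D_wf by (auto simp: wf_part_def)
    have NM: "NN p \<le> Max (insert 0 (NN ` G))" using fin pG by (intro Max_ge) auto
    show "p \<in> Cb D M" unfolding Cb_def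
    proof (intro CollectI conjI pI ballI impI)
      fix B B' a a' assume "B \<in> blks p" "B' \<in> blks p" "a \<in> B" "a' \<in> B'"
      then have "a \<in> points p" "a' \<in> points p" using partition_onD1[OF wf] by auto
      then show "\<bar>lvp p a - lvp p a'\<bar> < M" using lvp_bound[of a p] lvp_bound[of a' p] NM
        unfolding M_def by linarith
    qed
  qed
  have sub: "I_D D \<subseteq> Cb D M" using gen_cat_least[OF Cb_cat2[OF cat] GC] assms(3) by simp
  obtain k where k: "k \<in> {n. n \<ge> 1} - D" "k > nat M"
    using assms(2) by (meson infinite_nat_iff_unbounded)
  obtain p B B' a a' where w: "p \<in> I_D D" "B \<in> blks p" "B' \<in> blks p" "crosses p B B'" "a \<in> B" "a' \<in> B'"
    "\<bar>lvp p a - lvp p a'\<bar> = int k"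
    using witness2[OF assms(1), of k] k by auto
  have "p \<in> Cb D M" using w sub by blast
  then have "\<bar>lvp p a - lvp p a'\<bar> < M" using w unfolding Cb_def by blast
  then show False using w k by linarith
qed


end
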